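(* Let $M_\bullet=(M_n,\mathrm{tr}_n,e_{n+1})_{n\ge0}$ be a Markov tower of modulus $d$, and fix integers $j\ge0$, $k\ge1$. For $i\ge0$ and $\ell\ge1$ define $f^{i+\ell}_i:=d^{\ell(\ell-1)}(e_{i+\ell}e_{i+\ell-1}\cdots e_{i+1})(e_{i+\ell+1}e_{i+\ell}\cdots e_{i+2})\cdots(e_{i+2\ell-1}e_{i+2\ell-2}\cdots e_{i+\ell})\in M_{i+2\ell}$, and for $n\ge1$ set $g_n:=f^{j+nk}_{j+(n-1)k}\in M_{j+(n+1)k}$. Then $M_{j+k\bullet}:=(M_{j+nk},\mathrm{tr}_{j+nk},g_{n+1})_{n\ge0}$ is a Markov tower of modulus $d^k$ (i.e. the $g_n$ are projections satisfying the Temperley–Lieb–Jones relations with $d^{-2}$ replaced by $d^{-2k}$, $g_n$ implements the trace-preserving conditional expectation $M_{j+nk}\to M_{j+(n-1)k}$, this expectation applied from $M_{j+(n+1)k}$ sends $g_n$ to $d^{-2k}$, and $M_{j+(n+1)k}g_n=M_{j+nk}g_n$).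
   Context: A Markov tower $M_\bullet=(M_n,\mathrm{tr}_n,e_{n+1})_{n\ge0}$ is a sequence of finite-dimensional von Neumann algebras with unital inclusions $M_n\subset M_{n+1}$, faithful tracial states with $\mathrm{tr}_{n+1}|_{M_n}=\mathrm{tr}_n$, and projections $e_n\in M_{n+1}$ ($n\ge1$) such that: (M1) $e_i=e_i^2=e_i^*$, $e_ie_j=e_je_i$ for $|i-j|>1$, and $e_ie_{i\pm1}e_i=d^{-2}e_i$ for a fixed $d>0$ (the modulus); (M2) $e_nxe_n=E_n(x)e_n$ for $x\in M_n$, where $E_n:M_n\to M_{n-1}$ is the trace-preserving conditional expectation; (M3) $E_{n+1}(e_n)=d^{-2}$; (M4) $M_{n+1}e_n=M_ne_n$. *)

theory Defs
  imports Complex_Main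
begin

text \<open>The algebras M n of a Markov tower are
modelled as unital *-subalgebras of this ambient algebra (all sharing its unit),
so that the inclusions M n \<subseteq> M (n+1) are unital.\<close>

definition star_alg :: "(complex \<Rightarrow> 'a::ring_1 \<Rightarrow> 'a) \<Rightarrow> ('a \<Rightarrow> 'a) \<Rightarrow> bool" where
  "star_alg sm star \<longleftrightarrow>
     (\<forall>a b x. sm (a + b) x = sm a x + sm b x) \<and>
     (\<forall>a x y. sm a (x + y) = sm a x + sm a y) \<and>
     (\<forall>a b x. sm (a * b) x = sm a (sm b x)) \<and>
     (\<forall>x. sm 1 x = x) \<and>
     (\<forall>a x y. sm a (x * y) = sm a x * y) \<and>
     (\<forall>a x y. sm a (x * y) = x * sm a y) \<and>
     (\<forall>x y. star (x + y) = star x + star y) \<and>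
     (\<forall>x y. star (x * y) = star y * star x) \<and>
     (\<forall>x. star (star x) = x) \<and>
     (\<forall>a x. star (sm a x) = sm (cnj a) (star x))"

definition fd_star_subalg :: "(complex \<Rightarrow> 'a::ring_1 \<Rightarrow> 'a) \<Rightarrow> ('a \<Rightarrow> 'a) \<Rightarrow> 'a set \<Rightarrow> bool" where
  "fd_star_subalg sm star A \<longleftrightarrow>
     1 \<in> A \<and>
     (\<forall>x\<in>A. \<forall>y\<in>A. x + y \<in> A \<and> x * y \<in> A) \<and>
     (\<forall>a. \<forall>x\<in>A. sm a x \<in> A) \<and>
     (\<forall>x\<in>A. star x \<in> A) \<and>
     (\<exists>B. finite B \<and> B \<subseteq> A \<and> (\<forall>x\<in>A. \<exists>c. x = (\<Sum>b\<in>B. sm (c b) b)))"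

definition faithful_tracial_state ::
  "(complex \<Rightarrow> 'a::ring_1 \<Rightarrow> 'a) \<Rightarrow> ('a \<Rightarrow> 'a) \<Rightarrow> 'a set \<Rightarrow> ('a \<Rightarrow> complex) \<Rightarrow> bool" where
  "faithful_tracial_state sm star A t \<longleftrightarrow>
     (\<forall>x\<in>A. \<forall>y\<in>A. t (x + y) = t x + t y) \<and>
     (\<forall>a. \<forall>x\<in>A. t (sm a x) = a * t x) \<and>
     (\<forall>x\<in>A. \<forall>y\<in>A. t (x * y) = t (y * x)) \<and>
     t 1 = 1 \<and>
     (\<forall>x\<in>A. t (star x * x) \<in> \<real> \<and> Re (t (star x * x)) \<ge> 0) \<and>
     (\<forall>x\<in>A. t (star x * x) = 0 \<longrightarrow> x = 0)"

text \<open>The trace-preserving conditional expectation onto N with respect to the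
trace t: the unique y \<in> N with t(y z) = t(x z) for all z \<in> N.\<close>
definition cexp :: "('a::ring_1 \<Rightarrow> complex) \<Rightarrow> 'a set \<Rightarrow> 'a \<Rightarrow> 'a" where
  "cexp t N x = (THE y. y \<in> N \<and> (\<forall>z\<in>N. t (y * z) = t (x * z)))"

definition markov_tower ::
  "(complex \<Rightarrow> 'a::ring_1 \<Rightarrow> 'a) \<Rightarrow> ('a \<Rightarrow> 'a) \<Rightarrow> (nat \<Rightarrow> 'a set) \<Rightarrow> (nat \<Rightarrow> 'a \<Rightarrow> complex)
     \<Rightarrow> (nat \<Rightarrow> 'a) \<Rightarrow> real \<Rightarrow> bool" where
  "markov_tower sm star M tr e d \<longleftrightarrow>
     star_alg sm star \<and> d > 0 \<and>
     (\<forall>n. fd_star_subalg sm star (M n)) \<and>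
     (\<forall>n. M n \<subseteq> M (Suc n)) \<and>
     (\<forall>n. faithful_tracial_state sm star (M n) (tr n)) \<and>
     (\<forall>n. \<forall>x\<in>M n. tr (Suc n) x = tr n x) \<and>
     (\<forall>n\<ge>1. e n \<in> M (Suc n)) \<and>
     \<comment> \<open>(M1)\<close>
     (\<forall>n\<ge>1. e n * e n = e n \<and> star (e n) = e n) \<and>
     (\<forall>i\<ge>1. \<forall>j\<ge>1. (i + 1 < j \<or> j + 1 < i) \<longrightarrow> e i * e j = e j * e i) \<and>
     (\<forall>i\<ge>1. e i * e (Suc i) * e i = sm (complex_of_real (1 / d\<^sup>2)) (e i)) \<and>
     (\<forall>i\<ge>1. e (Suc i) * e i * e (Suc i) = sm (complex_of_real (1 / d\<^sup>2)) (e (Suc i))) \<and>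
     \<comment> \<open>(M2)\<close>
     (\<forall>n\<ge>1. \<forall>x\<in>M n. e n * x * e n = cexp (tr n) (M (n - 1)) x * e n) \<and>
     \<comment> \<open>(M3)\<close>
     (\<forall>n\<ge>1. cexp (tr (Suc n)) (M n) (e n) = sm (complex_of_real (1 / d\<^sup>2)) 1) \<and>
     \<comment> \<open>(M4)\<close>
     (\<forall>n\<ge>1. (\<lambda>x. x * e n) ` M (Suc n) = (\<lambda>x. x * e n) ` M n)"

definition desc_prod :: "(nat \<Rightarrow> 'a::monoid_mult) \<Rightarrow> nat \<Rightarrow> nat \<Rightarrow> 'a" where
  "desc_prod e a b = prod_list (map e (rev [b..<Suc a]))"

definition jw_f :: "(complex \<Rightarrow> 'a::ring_1 \<Rightarrow> 'a) \<Rightarrow> (nat \<Rightarrow> 'a) \<Rightarrow> real \<Rightarrow> nat \<Rightarrow> nat \<Rightarrow> 'a" where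
  "jw_f sm e d i l = sm (complex_of_real (d ^ (l * (l - 1))))
      (prod_list (map (\<lambda>r. desc_prod e (i + l + r) (i + 1 + r)) [0..<l]))"

end

theory Submission
  imports Defs
begin


section \<open>Generic algebra for star algebras\<close>

context
  fixes sm :: "complex \<Rightarrow> 'a::ring_1 \<Rightarrow> 'a" and star :: "'a \<Rightarrow> 'a"
  assumes SA: "star_alg sm star"
begin

lemma sm_add_l: "sm (a + b) x = sm a x + sm b x" using SA unfolding star_alg_def by metis
lemma sm_add_r: "sm a (x + y) = sm a x + sm a y" using SA unfolding star_alg_def by metis
lemma sm_sm: "sm a (sm b x) = sm (a * b) x" using SA unfolding star_alg_def by metis
lemma sm_one: "sm 1 x = x" using SA unfolding star_alg_def by metis
lemma sm_ml: "sm a x * y = sm a (x * y)" using SA unfolding star_alg_def by metis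
lemma sm_mr: "x * sm a y = sm a (x * y)" using SA unfolding star_alg_def by metis
lemma star_add: "star (x + y) = star x + star y" using SA unfolding star_alg_def by metis
lemma star_mult: "star (x * y) = star y * star x" using SA unfolding star_alg_def by metis
lemma star_star: "star (star x) = x" using SA unfolding star_alg_def by metis
lemma star_sm: "star (sm a x) = sm (cnj a) (star x)" using SA unfolding star_alg_def by metis

lemma sm_zero_l: "sm 0 x = 0"
  using sm_add_l[of 0 0 x] by simp
lemma sm_zero_r: "sm a 0 = 0"
  using sm_add_r[of a 0 0] by simp
lemma sm_neg_r: "sm a (- x) = - sm a x"
  using sm_add_r[of a x "-x"] sm_zero_r by (metis add.right_inverse minus_unique)
lemma sm_neg_l: "sm (- a) x = - sm a x"
  using sm_add_l[of a "-a" x] sm_zero_l by (metis add.right_inverse minus_unique)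
lemma sm_diff_r: "sm a (x - y) = sm a x - sm a y"
  using sm_add_r[of a x "-y"] sm_neg_r by simp
lemma sm_diff_l: "sm (a - b) x = sm a x - sm b x"
  using sm_add_l[of a "-b" x] sm_neg_l by simp
lemma sm_mm: "sm a x * sm b y = sm (a * b) (x * y)"
  by (simp add: sm_ml sm_mr sm_sm mult.commute)
lemma sm_one_l: "sm a 1 * x = sm a x" by (simp add: sm_ml)
lemma sm_one_r: "x * sm a 1 = sm a x" by (simp add: sm_mr)

lemma star_zero: "star 0 = 0"
  using star_add[of 0 0] by simp
lemma star_neg: "star (- x) = - star x"
  using star_add[of x "-x"] star_zero by (metis add.right_inverse minus_unique)
lemma star_diff: "star (x - y) = star x - star y"
  using star_add[of x "-y"] star_neg by simp
lemma star_one: "star 1 = 1"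
proof -
  have "star 1 = star 1 * star (star 1)" by (simp add: star_star)
  also have "\<dots> = star (star 1 * 1)" by (rule star_mult[symmetric])
  also have "\<dots> = 1" by (simp add: star_star)
  finally show ?thesis .
qed
lemma star_real: "star (sm (complex_of_real r) x) = sm (complex_of_real r) (star x)"
  by (simp add: star_sm)

end



context
  fixes sm :: "complex \<Rightarrow> 'a::ring_1 \<Rightarrow> 'a" and star :: "'a \<Rightarrow> 'a"
  assumes SA: "star_alg sm star"
begin

context
  fixes A :: "'a set"
  assumes FD: "fd_star_subalg sm star A"
begin
lemma sub_one: "1 \<in> A" using FD unfolding fd_star_subalg_def by blast
lemma sub_add: "x \<in> A \<Longrightarrow> y \<in> A \<Longrightarrow> x + y \<in> A" using FD unfolding fd_star_subalg_def by blast
lemma sub_mult: "x \<in> A \<Longrightarrow> y \<in> A \<Longrightarrow> x * y \<in> A" using FD unfolding fd_star_subalg_def by blast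
lemma sub_sm: "x \<in> A \<Longrightarrow> sm a x \<in> A" using FD unfolding fd_star_subalg_def by blast
lemma sub_star: "x \<in> A \<Longrightarrow> star x \<in> A" using FD unfolding fd_star_subalg_def by blast
lemma sub_zero: "0 \<in> A" using sub_sm[OF sub_one, of 0] sm_zero_l[OF SA] by simp
lemma sub_neg: "x \<in> A \<Longrightarrow> - x \<in> A"
  using sub_sm[of x "-1"] sm_neg_l[OF SA, of 1 x] sm_one[OF SA] by simp
lemma sub_diff: "x \<in> A \<Longrightarrow> y \<in> A \<Longrightarrow> x - y \<in> A"
  using sub_add[of x "-y"] sub_neg by simp
lemma sub_sum: "finite S \<Longrightarrow> (\<And>s. s \<in> S \<Longrightarrow> f s \<in> A) \<Longrightarrow> sum f S \<in> A"
  by (induction S rule: finite_induct) (auto intro: sub_add sub_zero)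
lemma sub_prod_list: "(\<And>x. x \<in> set xs \<Longrightarrow> x \<in> A) \<Longrightarrow> prod_list xs \<in> A"
  by (induction xs) (auto intro: sub_mult sub_one)
end

context
  fixes A :: "'a set" and t :: "'a \<Rightarrow> complex"
  assumes FT: "faithful_tracial_state sm star A t"
begin
lemma tr_add: "x \<in> A \<Longrightarrow> y \<in> A \<Longrightarrow> t (x + y) = t x + t y"
  using FT unfolding faithful_tracial_state_def by blast
lemma tr_sm: "x \<in> A \<Longrightarrow> t (sm a x) = a * t x"
  using FT unfolding faithful_tracial_state_def by blast
lemma tr_comm: "x \<in> A \<Longrightarrow> y \<in> A \<Longrightarrow> t (x * y) = t (y * x)"
  using FT unfolding faithful_tracial_state_def by blast
lemma tr_one: "t 1 = 1"
  using FT unfolding faithful_tracial_state_def by blast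
lemma tr_faithful: "x \<in> A \<Longrightarrow> t (star x * x) = 0 \<Longrightarrow> x = 0"
  using FT unfolding faithful_tracial_state_def by blast
end

context
  fixes A :: "'a set" and t :: "'a \<Rightarrow> complex"
  assumes FT: "faithful_tracial_state sm star A t" and FD: "fd_star_subalg sm star A"
begin
lemma tr_zero: "t 0 = 0"
  using tr_add[OF FT sub_zero[OF FD] sub_zero[OF FD]] by simp
lemma tr_neg: "x \<in> A \<Longrightarrow> t (- x) = - t x"
  using tr_add[OF FT, of x "-x"] sub_neg[OF FD, of x] tr_zero by (simp add: add_eq_0_iff2)
lemma tr_diff: "x \<in> A \<Longrightarrow> y \<in> A \<Longrightarrow> t (x - y) = t x - t y"
  using tr_add[OF FT, of x "-y"] sub_neg[OF FD, of y] tr_neg[of y] by simp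
lemma tr_sum: "finite S \<Longrightarrow> (\<And>s. s \<in> S \<Longrightarrow> f s \<in> A) \<Longrightarrow> t (sum f S) = (\<Sum>s\<in>S. t (f s))"
proof (induction S rule: finite_induct)
  case empty then show ?case by (simp add: tr_zero)
next
  case (insert x F)
  then show ?case using tr_add[OF FT, of "f x" "sum f F"] sub_sum[OF FD, of F f] by simp
qed
lemma faithful2: "x \<in> A \<Longrightarrow> t (x * star x) = 0 \<Longrightarrow> x = 0"
  using tr_faithful[OF FT, of "star x"] sub_star[OF FD, of x] star_star[OF SA, of x] star_zero[OF SA]
  by metis

definition ip :: "'a \<Rightarrow> 'a \<Rightarrow> complex" where "ip u v = t (u * star v)"

lemma ip_add_l: "p \<in> A \<Longrightarrow> q \<in> A \<Longrightarrow> v \<in> A \<Longrightarrow> ip (p + q) v = ip p v + ip q v"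
  unfolding ip_def by (simp add: distrib_right tr_add[OF FT] sub_mult[OF FD] sub_star[OF FD])
lemma ip_diff_l: "p \<in> A \<Longrightarrow> q \<in> A \<Longrightarrow> v \<in> A \<Longrightarrow> ip (p - q) v = ip p v - ip q v"
  unfolding ip_def by (simp add: left_diff_distrib tr_diff sub_mult[OF FD] sub_star[OF FD])
lemma ip_sm_l: "p \<in> A \<Longrightarrow> v \<in> A \<Longrightarrow> ip (sm a p) v = a * ip p v"
  unfolding ip_def by (simp add: sm_ml[OF SA] tr_sm[OF FT] sub_mult[OF FD] sub_star[OF FD])
lemma ip_add_r: "p \<in> A \<Longrightarrow> v \<in> A \<Longrightarrow> w \<in> A \<Longrightarrow> ip p (v + w) = ip p v + ip p w"
  unfolding ip_def by (simp add: star_add[OF SA] distrib_left tr_add[OF FT] sub_mult[OF FD] sub_star[OF FD])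
lemma ip_sm_r: "p \<in> A \<Longrightarrow> v \<in> A \<Longrightarrow> ip p (sm a v) = cnj a * ip p v"
  unfolding ip_def by (simp add: star_sm[OF SA] sm_mr[OF SA] tr_sm[OF FT] sub_mult[OF FD] sub_star[OF FD])


lemma proj_step:
  fixes N :: "'a set"
  assumes FDN: "fd_star_subalg sm star N" and NA: "N \<subseteq> A"
    and fin: "finite B" and BN: "B \<subseteq> N"
  shows "\<forall>x\<in>A. \<exists>y\<in>{y. \<exists>c. y = (\<Sum>b\<in>B. sm (c b) b)}.
            \<forall>v\<in>{y. \<exists>c. y = (\<Sum>b\<in>B. sm (c b) b)}. ip (x - y) v = 0"
  using fin BN
proof (induction B rule: finite_induct)
  case empty
  show ?case
  proof
    fix x assume "x \<in> A"
    show "\<exists>y\<in>{y. \<exists>c. y = (\<Sum>b\<in>{}. sm (c b) b)}. \<forall>v\<in>{y. \<exists>c. y = (\<Sum>b\<in>{}. sm (c b) b)}. ip (x - y) v = 0"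
      by (rule bexI[of _ 0]) (auto simp: ip_def star_zero[OF SA] tr_zero)
  qed
next
  case (insert b0 B)
  define S where "S = {y. \<exists>c. y = (\<Sum>b\<in>B. sm (c b) b)}"
  define S' where "S' = {y. \<exists>c. y = (\<Sum>b\<in>insert b0 B. sm (c b) b)}"
  have b0N: "b0 \<in> N" and BN: "B \<subseteq> N" using insert by auto
  have IH: "\<forall>x\<in>A. \<exists>y\<in>S. \<forall>v\<in>S. ip (x - y) v = 0" using insert BN unfolding S_def by blast
  have smsum: "sm a (sum f F) = (\<Sum>s\<in>F. sm a (f s))" if "finite F" for a and f :: "'a \<Rightarrow> 'a" and F
    using that by (induction F rule: finite_induct) (auto simp: sm_zero_r[OF SA] sm_add_r[OF SA])
  have SN: "S \<subseteq> N"
  proof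
    fix y assume "y \<in> S"
    then obtain c where "y = (\<Sum>b\<in>B. sm (c b) b)" unfolding S_def by blast
    then show "y \<in> N" using BN insert(1) by (auto intro!: sub_sum[OF FDN] sub_sm[OF FDN])
  qed
  have SA': "S \<subseteq> A" using SN NA by blast
  have S_add: "v + w \<in> S" if vw: "v \<in> S" "w \<in> S" for v w
  proof -
    obtain c1 c2 where "v = (\<Sum>b\<in>B. sm (c1 b) b)" "w = (\<Sum>b\<in>B. sm (c2 b) b)"
      using vw unfolding S_def by blast
    then have eq: "v + w = (\<Sum>b\<in>B. sm (c1 b + c2 b) b)"
      by (simp add: sum.distrib sm_add_l[OF SA])
    show ?thesis unfolding S_def using eq by (intro CollectI exI[where x="\<lambda>b. c1 b + c2 b"]) simp
  qed
  have S_sm: "sm a v \<in> S" if vS: "v \<in> S" for v a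
  proof -
    obtain c1 where "v = (\<Sum>b\<in>B. sm (c1 b) b)" using vS unfolding S_def by blast
    then have eq: "sm a v = (\<Sum>b\<in>B. sm (a * c1 b) b)"
      by (simp add: smsum[OF insert(1)] sm_sm[OF SA])
    show ?thesis unfolding S_def using eq by (intro CollectI exI[where x="\<lambda>b. a * c1 b"]) simp
  qed
  have S_diff: "v - w \<in> S" if "v \<in> S" "w \<in> S" for v w
  proof -
    have "sm (-1) w = - w" using sm_neg_l[OF SA, of 1 w] sm_one[OF SA] by simp
    then show ?thesis using S_add[OF that(1) S_sm[OF that(2), of "-1"]] by simp
  qed
  have S'_char: "S' = {v + sm a b0 | v a. v \<in> S}"
  proof
    show "S' \<subseteq> {v + sm a b0 | v a. v \<in> S}"
    proof
      fix y assume "y \<in> S'"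
      then obtain c where "y = (\<Sum>b\<in>insert b0 B. sm (c b) b)" unfolding S'_def by blast
      then have "y = (\<Sum>b\<in>B. sm (c b) b) + sm (c b0) b0" using insert(1,2) by (simp add: add.commute)
      then show "y \<in> {v + sm a b0 | v a. v \<in> S}" unfolding S_def by blast
    qed
  next
    show "{v + sm a b0 | v a. v \<in> S} \<subseteq> S'"
    proof
      fix y assume "y \<in> {v + sm a b0 | v a. v \<in> S}"
      then obtain v a c where y: "y = v + sm a b0" and v: "v = (\<Sum>b\<in>B. sm (c b) b)"
        unfolding S_def by blast
      have "(\<Sum>b\<in>B. sm ((c(b0 := a)) b) b) = (\<Sum>b\<in>B. sm (c b) b)"
        using insert(2) by (intro sum.cong) auto
      then have "(\<Sum>b\<in>insert b0 B. sm ((c(b0 := a)) b) b) = y"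
        using insert(1,2) y v by (simp add: add.commute)
      then show "y \<in> S'" unfolding S'_def by (intro CollectI exI[where x="c(b0 := a)"]) simp
    qed
  qed
  have b0A: "b0 \<in> A" using b0N NA by blast
  have zS: "0 \<in> S" unfolding S_def by (rule CollectI, rule exI[of _ "\<lambda>_. 0"]) (simp add: sm_zero_l[OF SA])
  obtain yb where yb: "yb \<in> S" "\<forall>v\<in>S. ip (b0 - yb) v = 0" using IH b0A by blast
  define u where "u = b0 - yb"
  have uA: "u \<in> A" unfolding u_def using b0A yb(1) SA' sub_diff[OF FD] by blast
  have uS: "\<forall>v\<in>S. ip u v = 0" using yb unfolding u_def by blast
  have S'_alt: "S' = {w + sm a u | w a. w \<in> S}"
  proof -
    have "v + sm a b0 = (v + sm a yb) + sm a u" for v a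
      unfolding u_def by (simp add: sm_diff_r[OF SA])
    moreover have "w + sm a u = (w - sm a yb) + sm a b0" for w a
      unfolding u_def by (simp add: sm_diff_r[OF SA])
    ultimately show ?thesis unfolding S'_char using S_add S_sm S_diff yb(1) by blast
  qed
  show ?case unfolding S'_def[symmetric]
  proof
    fix x assume xA: "x \<in> A"
    obtain yx where yx: "yx \<in> S" "\<forall>v\<in>S. ip (x - yx) v = 0" using IH xA by blast
    have yxA: "yx \<in> A" using yx(1) SA' by blast
    show "\<exists>y\<in>S'. \<forall>v\<in>S'. ip (x - y) v = 0"
    proof (cases "ip u u = 0")
      case True
      then have "u = 0" using faithful2 uA unfolding ip_def by blast
      then have "S' = S" unfolding S'_alt using sm_zero_r[OF SA] by auto
      then show ?thesis using yx by blast
    next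
      case False
      define \<alpha> where "\<alpha> = ip (x - yx) u / ip u u"
      define y where "y = yx + sm \<alpha> u"
      have yS': "y \<in> S'" unfolding S'_alt y_def using yx(1) by blast
      have xyA: "x - yx \<in> A" using xA yxA sub_diff[OF FD] by blast
      have smuA: "sm \<alpha> u \<in> A" using uA sub_sm[OF FD] by blast
      have xy: "x - y = (x - yx) - sm \<alpha> u" unfolding y_def by simp
      have orth: "ip (x - y) v = 0" if vS': "v \<in> S'" for v
      proof -
        obtain w a where v: "v = w + sm a u" and wS: "w \<in> S" using vS' unfolding S'_alt by blast
        have wA: "w \<in> A" using wS SA' by blast
        have smA: "sm a u \<in> A" using uA sub_sm[OF FD] by blast
        have xmyA: "x - y \<in> A" unfolding xy using xyA smuA sub_diff[OF FD] by blast
        have "ip (x - y) v = ip (x - y) w + ip (x - y) (sm a u)"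
          unfolding v using ip_add_r xmyA wA smA by blast
        also have "ip (x - y) w = ip (x - yx) w - \<alpha> * ip u w"
          unfolding xy using ip_diff_l[OF xyA smuA wA] ip_sm_l[OF uA wA] by simp
        also have "\<dots> = 0" using yx(2) uS wS by simp
        also have "ip (x - y) (sm a u) = cnj a * ip (x - y) u"
          using ip_sm_r[OF xmyA uA] by simp
        also have "ip (x - y) u = ip (x - yx) u - \<alpha> * ip u u"
          unfolding xy using ip_diff_l[OF xyA smuA uA] ip_sm_l[OF uA uA] by simp
        also have "\<dots> = 0" using False unfolding \<alpha>_def by simp
        finally show ?thesis by simp
      qed
      show ?thesis using yS' orth by blast
    qed
  qed
qed

lemma cexp_exists:
  fixes N :: "'a set"
  assumes FDN: "fd_star_subalg sm star N" and NA: "N \<subseteq> A" and xA: "x \<in> A"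
  shows "\<exists>y\<in>N. \<forall>z\<in>N. t (y * z) = t (x * z)"
proof -
  obtain B where B: "finite B" "B \<subseteq> N" "\<forall>x\<in>N. \<exists>c. x = (\<Sum>b\<in>B. sm (c b) b)"
    using FDN unfolding fd_star_subalg_def by blast
  define S where "S = {y. \<exists>c. y = (\<Sum>b\<in>B. sm (c b) b)}"
  have SN: "S \<subseteq> N"
  proof
    fix y assume "y \<in> S"
    then obtain c where "y = (\<Sum>b\<in>B. sm (c b) b)" unfolding S_def by blast
    then show "y \<in> N" using B by (auto intro!: sub_sum[OF FDN] sub_sm[OF FDN])
  qed
  have NS: "N \<subseteq> S" using B(3) unfolding S_def by blast
  obtain y where y: "y \<in> S" "\<forall>v\<in>S. ip (x - y) v = 0"
    using proj_step[OF FDN NA B(1) B(2)] xA unfolding S_def by blast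
  have yN: "y \<in> N" using y SN by blast
  have "t (y * z) = t (x * z)" if zN: "z \<in> N" for z
  proof -
    have szN: "star z \<in> N" using sub_star[OF FDN zN] .
    have "ip (x - y) (star z) = 0" using y(2) szN NS by blast
    then have "t ((x - y) * z) = 0" unfolding ip_def using star_star[OF SA] by simp
    moreover have "t ((x - y) * z) = t (x * z) - t (y * z)"
      using tr_diff sub_mult[OF FD] xA yN zN NA by (simp add: left_diff_distrib subsetD)
    ultimately show ?thesis by simp
  qed
  then show ?thesis using yN by blast
qed

lemma cexp_unique:
  fixes N :: "'a set"
  assumes FDN: "fd_star_subalg sm star N" and NA: "N \<subseteq> A"
    and y1: "y1 \<in> N" "\<forall>z\<in>N. t (y1 * z) = t (x * z)"
    and y2: "y2 \<in> N" "\<forall>z\<in>N. t (y2 * z) = t (x * z)"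
  shows "y1 = y2"
proof -
  define w where "w = y1 - y2"
  have wN: "w \<in> N" unfolding w_def using y1 y2 sub_diff[OF FDN] by blast
  have swN: "star w \<in> N" using sub_star[OF FDN wN] .
  have e1: "w * star w = y1 * star w - y2 * star w" by (simp add: w_def left_diff_distrib)
  have "t (w * star w) = t (y1 * star w) - t (y2 * star w)"
    unfolding e1 using tr_diff sub_mult[OF FD] y1 y2 swN NA by (meson subsetD)
  also have "\<dots> = 0" using y1 y2 swN by simp
  finally have "w = 0" using faithful2 wN NA by blast
  then show ?thesis unfolding w_def by simp
qed

lemma cexp_prop:
  fixes N :: "'a set"
  assumes FDN: "fd_star_subalg sm star N" and NA: "N \<subseteq> A" and xA: "x \<in> A"
  shows "cexp t N x \<in> N \<and> (\<forall>z\<in>N. t (cexp t N x * z) = t (x * z))"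
proof -
  obtain y where y: "y \<in> N" "\<forall>z\<in>N. t (y * z) = t (x * z)" using cexp_exists[OF FDN NA xA] by blast
  have "cexp t N x = y" unfolding cexp_def
    by (rule the_equality) (use y cexp_unique[OF FDN NA] in blast)+
  then show ?thesis using y by simp
qed

lemma cexp_eqI:
  fixes N :: "'a set"
  assumes FDN: "fd_star_subalg sm star N" and NA: "N \<subseteq> A"
    and y: "y \<in> N" "\<forall>z\<in>N. t (y * z) = t (x * z)"
  shows "cexp t N x = y"
  unfolding cexp_def
  by (rule the_equality) (use y cexp_unique[OF FDN NA] in blast)+

end

end



locale mt =
  fixes sm :: "complex \<Rightarrow> 'a::ring_1 \<Rightarrow> 'a" and star :: "'a \<Rightarrow> 'a"
    and M :: "nat \<Rightarrow> 'a set" and tr :: "nat \<Rightarrow> 'a \<Rightarrow> complex" and e :: "nat \<Rightarrow> 'a"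
    and d :: real
  assumes MT: "markov_tower sm star M tr e d"
begin

lemma SA: "star_alg sm star"
  using MT[unfolded markov_tower_def, THEN conjunct1] by blast
lemma dpos: "d > 0"
  using MT[unfolded markov_tower_def, THEN conjunct2, THEN conjunct1] by blast
lemma FDn: "fd_star_subalg sm star (M n)"
  using MT[unfolded markov_tower_def, THEN conjunct2, THEN conjunct2, THEN conjunct1] by blast
lemma Msub: "M n \<subseteq> M (Suc n)"
  using MT[unfolded markov_tower_def, THEN conjunct2, THEN conjunct2, THEN conjunct2, THEN conjunct1] by blast
lemma FTn: "faithful_tracial_state sm star (M n) (tr n)"
  using MT[unfolded markov_tower_def, THEN conjunct2, THEN conjunct2, THEN conjunct2, THEN conjunct2, THEN conjunct1] by blast
lemma trS: "x \<in> M n \<Longrightarrow> tr (Suc n) x = tr n x"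
  using MT[unfolded markov_tower_def, THEN conjunct2, THEN conjunct2, THEN conjunct2, THEN conjunct2, THEN conjunct2, THEN conjunct1] by blast
lemma eMS: "n \<ge> 1 \<Longrightarrow> e n \<in> M (Suc n)"
  using MT[unfolded markov_tower_def, THEN conjunct2, THEN conjunct2, THEN conjunct2, THEN conjunct2, THEN conjunct2, THEN conjunct2, THEN conjunct1] by blast
lemma e_idem: "n \<ge> 1 \<Longrightarrow> e n * e n = e n"
  using MT[unfolded markov_tower_def, THEN conjunct2, THEN conjunct2, THEN conjunct2, THEN conjunct2, THEN conjunct2, THEN conjunct2, THEN conjunct2, THEN conjunct1] by blast
lemma e_star: "n \<ge> 1 \<Longrightarrow> star (e n) = e n"
  using MT[unfolded markov_tower_def, THEN conjunct2, THEN conjunct2, THEN conjunct2, THEN conjunct2, THEN conjunct2, THEN conjunct2, THEN conjunct2, THEN conjunct1] by blast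
lemma e_comm: "i \<ge> 1 \<Longrightarrow> j \<ge> 1 \<Longrightarrow> i + 1 < j \<Longrightarrow> e i * e j = e j * e i"
  using MT[unfolded markov_tower_def, THEN conjunct2, THEN conjunct2, THEN conjunct2, THEN conjunct2, THEN conjunct2, THEN conjunct2, THEN conjunct2, THEN conjunct2, THEN conjunct1] by blast
lemma TL1: "i \<ge> 1 \<Longrightarrow> e i * e (Suc i) * e i = sm (complex_of_real (1 / d\<^sup>2)) (e i)"
  using MT[unfolded markov_tower_def, THEN conjunct2, THEN conjunct2, THEN conjunct2, THEN conjunct2, THEN conjunct2, THEN conjunct2, THEN conjunct2, THEN conjunct2, THEN conjunct2, THEN conjunct1] by blast
lemma TL2: "i \<ge> 1 \<Longrightarrow> e (Suc i) * e i * e (Suc i) = sm (complex_of_real (1 / d\<^sup>2)) (e (Suc i))"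
  using MT[unfolded markov_tower_def, THEN conjunct2, THEN conjunct2, THEN conjunct2, THEN conjunct2, THEN conjunct2, THEN conjunct2, THEN conjunct2, THEN conjunct2, THEN conjunct2, THEN conjunct2, THEN conjunct1] by blast
lemma M2: "n \<ge> 1 \<Longrightarrow> x \<in> M n \<Longrightarrow> e n * x * e n = cexp (tr n) (M (n - 1)) x * e n"
  using MT[unfolded markov_tower_def, THEN conjunct2, THEN conjunct2, THEN conjunct2, THEN conjunct2, THEN conjunct2, THEN conjunct2, THEN conjunct2, THEN conjunct2, THEN conjunct2, THEN conjunct2, THEN conjunct2, THEN conjunct1] by blast
lemma M3: "n \<ge> 1 \<Longrightarrow> cexp (tr (Suc n)) (M n) (e n) = sm (complex_of_real (1 / d\<^sup>2)) 1"
  using MT[unfolded markov_tower_def, THEN conjunct2, THEN conjunct2, THEN conjunct2, THEN conjunct2, THEN conjunct2, THEN conjunct2, THEN conjunct2, THEN conjunct2, THEN conjunct2, THEN conjunct2, THEN conjunct2, THEN conjunct2, THEN conjunct1] by blast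
lemma M4: "n \<ge> 1 \<Longrightarrow> (\<lambda>x. x * e n) ` M (Suc n) = (\<lambda>x. x * e n) ` M n"
  using MT[unfolded markov_tower_def, THEN conjunct2, THEN conjunct2, THEN conjunct2, THEN conjunct2, THEN conjunct2, THEN conjunct2, THEN conjunct2, THEN conjunct2, THEN conjunct2, THEN conjunct2, THEN conjunct2, THEN conjunct2, THEN conjunct2] by blast

lemma M4': "n \<ge> 1 \<Longrightarrow> x \<in> M (Suc n) \<Longrightarrow> \<exists>y\<in>M n. x * e n = y * e n"
proof -
  assume n: "n \<ge> 1" and x: "x \<in> M (Suc n)"
  have "x * e n \<in> (\<lambda>x. x * e n) ` M n" using M4[OF n] x by blast
  then show ?thesis by auto
qed

lemma Mmono: "i \<le> j \<Longrightarrow> M i \<subseteq> M j"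
  by (induction j rule: dec_induct) (use Msub in auto)
lemma Mmono': "x \<in> M i \<Longrightarrow> i \<le> j \<Longrightarrow> x \<in> M j"
  using Mmono by blast
lemma tr_lift: "i \<le> j \<Longrightarrow> x \<in> M i \<Longrightarrow> tr j x = tr i x"
proof (induction j rule: dec_induct)
  case base then show ?case by simp
next
  case (step n) then show ?case using trS[of x n] Mmono'[of x i n] by simp
qed
lemma eM: "1 \<le> i \<Longrightarrow> i < n \<Longrightarrow> e i \<in> M n"
  using eMS[of i] Mmono'[of "e i" "Suc i" n] by simp

lemma M_one: "1 \<in> M n" using sub_one[OF SA FDn] .
lemma M_zero: "0 \<in> M n" using sub_zero[OF SA FDn] .
lemma M_add: "x \<in> M n \<Longrightarrow> y \<in> M n \<Longrightarrow> x + y \<in> M n" using sub_add[OF SA FDn] .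
lemma M_diff: "x \<in> M n \<Longrightarrow> y \<in> M n \<Longrightarrow> x - y \<in> M n" using sub_diff[OF SA FDn] .
lemma M_mult: "x \<in> M n \<Longrightarrow> y \<in> M n \<Longrightarrow> x * y \<in> M n" using sub_mult[OF SA FDn] .
lemma M_sm: "x \<in> M n \<Longrightarrow> sm a x \<in> M n" using sub_sm[OF SA FDn] .
lemma M_star: "x \<in> M n \<Longrightarrow> star x \<in> M n" using sub_star[OF SA FDn] .
lemma M_prod_list: "(\<And>x. x \<in> set xs \<Longrightarrow> x \<in> M n) \<Longrightarrow> prod_list xs \<in> M n"
  using sub_prod_list[OF SA FDn] .

lemma tr_add': "x \<in> M n \<Longrightarrow> y \<in> M n \<Longrightarrow> tr n (x + y) = tr n x + tr n y" using tr_add[OF SA FTn] .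
lemma tr_sm': "x \<in> M n \<Longrightarrow> tr n (sm a x) = a * tr n x" using tr_sm[OF SA FTn] .
lemma tr_comm': "x \<in> M n \<Longrightarrow> y \<in> M n \<Longrightarrow> tr n (x * y) = tr n (y * x)" using tr_comm[OF SA FTn] .
lemma tr_diff': "x \<in> M n \<Longrightarrow> y \<in> M n \<Longrightarrow> tr n (x - y) = tr n x - tr n y"
  using tr_diff[OF SA FTn FDn] .
lemma faithful': "x \<in> M n \<Longrightarrow> tr n (x * star x) = 0 \<Longrightarrow> x = 0"
  using faithful2[OF SA FTn FDn] .

definition E :: "nat \<Rightarrow> 'a \<Rightarrow> 'a" where "E n x = cexp (tr n) (M (n - 1)) x"

lemma cexp_gen:
  assumes "p \<le> q" "x \<in> M q"
  shows "cexp (tr q) (M p) x \<in> M p \<and> (\<forall>z\<in>M p. tr q (cexp (tr q) (M p) x * z) = tr q (x * z))"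
  using cexp_prop[OF SA FTn FDn FDn Mmono[OF assms(1)] assms(2)] .

lemma cexp_genI:
  assumes "p \<le> q" "y \<in> M p" "\<forall>z\<in>M p. tr q (y * z) = tr q (x * z)"
  shows "cexp (tr q) (M p) x = y"
  using cexp_eqI[OF SA FTn FDn FDn Mmono[OF assms(1)] assms(2,3)] .

lemma E_prop:
  assumes "n \<ge> 1" "x \<in> M n"
  shows "E n x \<in> M (n - 1)" "\<forall>z\<in>M (n - 1). tr n (E n x * z) = tr n (x * z)"
  using cexp_gen[of "n - 1" n x] assms unfolding E_def by auto

lemma E_id: "n \<ge> 1 \<Longrightarrow> x \<in> M (n - 1) \<Longrightarrow> E n x = x"
  unfolding E_def by (rule cexp_genI) auto

lemma E_tr: "n \<ge> 1 \<Longrightarrow> x \<in> M n \<Longrightarrow> tr n (E n x) = tr n x"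
proof -
  assume "n \<ge> 1" "x \<in> M n"
  then have "tr n (E n x * 1) = tr n (x * 1)" using E_prop(2)[of n x] M_one[of "n - 1"] by blast
  then show ?thesis by simp
qed

lemma M2E: "n \<ge> 1 \<Longrightarrow> x \<in> M n \<Longrightarrow> e n * x * e n = E n x * e n"
  using M2 unfolding E_def .

abbreviation "\<delta> \<equiv> complex_of_real (1 / d\<^sup>2)"

lemma F1a:
  assumes "n \<ge> 1" "y \<in> M n"
  shows "tr (Suc n) (e n * y) = (1 / d\<^sup>2) * tr (Suc n) y"
proof -
  have "cexp (tr (Suc n)) (M n) (e n) \<in> M n \<and> (\<forall>z\<in>M n. tr (Suc n) (cexp (tr (Suc n)) (M n) (e n) * z) = tr (Suc n) (e n * z))"
    using cexp_gen[of n "Suc n" "e n"] eMS[OF assms(1)] by simp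
  then have "tr (Suc n) (sm \<delta> 1 * y) = tr (Suc n) (e n * y)" using M3[OF assms(1)] assms(2) by simp
  moreover have "tr (Suc n) (sm \<delta> 1 * y) = \<delta> * tr (Suc n) y"
    using sm_one_l[OF SA] tr_sm' Mmono'[OF assms(2), of "Suc n"] by simp
  ultimately show ?thesis by simp
qed

lemma F1:
  assumes "n \<ge> 1" "y \<in> M n" "Suc n \<le> T"
  shows "tr T (e n * y) = (1 / d\<^sup>2) * tr T y" "tr T (y * e n) = (1 / d\<^sup>2) * tr T y"
proof -
  have eyM: "e n * y \<in> M (Suc n)" using eMS[OF assms(1)] Mmono'[OF assms(2), of "Suc n"] M_mult by simp
  have yM: "y \<in> M (Suc n)" using Mmono'[OF assms(2), of "Suc n"] by simp
  show "tr T (e n * y) = (1 / d\<^sup>2) * tr T y"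
    using F1a[OF assms(1,2)] tr_lift[OF assms(3) eyM] tr_lift[OF assms(3) yM] by simp
  moreover have "tr T (y * e n) = tr T (e n * y)"
    using tr_comm'[of y T "e n"] Mmono'[OF yM assms(3)] eM[OF assms(1), of T] assms(3) by simp
  ultimately show "tr T (y * e n) = (1 / d\<^sup>2) * tr T y" by simp
qed

lemma F2:
  assumes n: "n \<ge> 1" and x: "x \<in> M (n - 1)"
  shows "e n * x = x * e n"
proof -
  have xn: "x \<in> M n" using x Mmono' by force
  have sxn: "star x \<in> M n" using M_star[OF xn] .
  have xsx: "x * star x \<in> M (n - 1)" using x M_star M_mult by blast
  have exe: "e n * x * e n = x * e n" using M2E[OF n xn] E_id[OF n x] by simp
  have esxe: "e n * star x * e n = star x * e n" using M2E[OF n sxn] E_id[OF n M_star[OF x]] by simp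
  have exxe: "e n * (x * star x) * e n = x * star x * e n"
    using M2E[OF n Mmono'[OF xsx, of n]] E_id[OF n xsx] by simp
  define u where "u = e n * x - e n * x * e n"
  have su: "star u = star x * e n - e n * star x * e n"
    unfolding u_def using star_diff[OF SA] star_mult[OF SA] e_star[OF n] by (simp add: mult.assoc)
  have ee: "e n * e n = e n" using e_idem[OF n] .
  have "u * star u = (e n * x - e n * x * e n) * (star x * e n - e n * star x * e n)"
    using su u_def by simp
  also have "\<dots> = e n * (x * star x) * e n - (e n * x * e n) * star x * e n
      - (e n * x * e n) * star x * e n + (e n * x * (e n * e n)) * star x * e n"
    by (simp add: algebra_simps)
  also have "\<dots> = e n * (x * star x) * e n - (e n * x * e n) * star x * e n"
    using ee by simp
  also have "(e n * x * e n) * star x * e n = x * (e n * star x * e n)"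
    unfolding exe by (simp add: mult.assoc)
  also have "\<dots> = x * star x * e n" using esxe by (simp add: mult.assoc)
  finally have "u * star u = 0" using exxe by simp
  moreover have "u \<in> M (Suc n)"
    unfolding u_def using eMS[OF n] Mmono'[OF xn, of "Suc n"] M_mult M_diff by auto
  ultimately have "u = 0" using faithful'[of u "Suc n"] tr_zero[OF SA FTn FDn] by auto
  then show ?thesis unfolding u_def using exe by simp
qed

lemma F2g: "1 \<le> i \<Longrightarrow> x \<in> M p \<Longrightarrow> p < i \<Longrightarrow> e i * x = x * e i"
  using F2[of i x] Mmono'[of x p "i - 1"] by simp

end



section \<open>Words\<close>

definition asc_prod :: "(nat \<Rightarrow> 'a::monoid_mult) \<Rightarrow> nat \<Rightarrow> nat \<Rightarrow> 'a" where
  "asc_prod e b a = prod_list (map e [b..<Suc a])"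

definition grid :: "(nat \<Rightarrow> 'a::monoid_mult) \<Rightarrow> nat \<Rightarrow> nat \<Rightarrow> nat \<Rightarrow> 'a" where
  "grid e a p q = prod_list (map (\<lambda>r. desc_prod e (a + q + r) (a + 1 + r)) [0..<p])"

lemma dp_Suc: "b \<le> Suc a \<Longrightarrow> desc_prod e (Suc a) b = e (Suc a) * desc_prod e a b"
  unfolding desc_prod_def by (simp add: upt_Suc)
lemma dp_empty: "desc_prod e a (Suc a) = 1"
  unfolding desc_prod_def by simp
lemma dp_single: "desc_prod e a a = e a"
  unfolding desc_prod_def by simp
lemma dp_low: "b \<le> a \<Longrightarrow> desc_prod e a b = desc_prod e a (Suc b) * e b"
proof -
  assume "b \<le> a"
  then have "[b..<Suc a] = b # [Suc b..<Suc a]" by (simp del: upt_Suc add: upt_conv_Cons)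
  then show ?thesis unfolding desc_prod_def by (simp del: upt_Suc)
qed
lemma dp_split: "b \<le> Suc c \<Longrightarrow> c \<le> a \<Longrightarrow> desc_prod e a b = desc_prod e a (Suc c) * desc_prod e c b"
proof -
  assume h: "b \<le> Suc c" "c \<le> a"
  have "[b..<Suc c + (a - c)] = [b..<Suc c] @ [Suc c..<Suc c + (a - c)]" by (rule upt_add_eq_append) (use h in auto)
  moreover have "Suc c + (a - c) = Suc a" using h by simp
  ultimately have "[b..<Suc a] = [b..<Suc c] @ [Suc c..<Suc a]" by simp
  then show ?thesis unfolding desc_prod_def by (simp del: upt_Suc)
qed
lemma ap_Suc: "b \<le> Suc a \<Longrightarrow> asc_prod e b (Suc a) = asc_prod e b a * e (Suc a)"
  unfolding asc_prod_def by (simp add: upt_Suc)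
lemma ap_empty: "asc_prod e (Suc a) a = 1"
  unfolding asc_prod_def by simp
lemma ap_single: "asc_prod e a a = e a"
  unfolding asc_prod_def by simp
lemma ap_low: "b \<le> a \<Longrightarrow> asc_prod e b a = e b * asc_prod e (Suc b) a"
proof -
  assume "b \<le> a"
  then have "[b..<Suc a] = b # [Suc b..<Suc a]" by (simp del: upt_Suc add: upt_conv_Cons)
  then show ?thesis unfolding asc_prod_def by (simp del: upt_Suc)
qed

lemma prod_list_comm: "(\<And>y. y \<in> set ys \<Longrightarrow> y * x = x * y) \<Longrightarrow> prod_list ys * x = x * (prod_list ys :: 'a::monoid_mult)"
proof (induction ys)
  case Nil then show ?case by simp
next
  case (Cons y ys)
  have "prod_list (y # ys) * x = y * (prod_list ys * x)" by (simp add: mult.assoc)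
  also have "\<dots> = y * (x * prod_list ys)" using Cons by simp
  also have "\<dots> = (y * x) * prod_list ys" by (simp add: mult.assoc)
  also have "\<dots> = x * prod_list (y # ys)" using Cons.prems by (simp add: mult.assoc)
  finally show ?case .
qed

lemma dp_comm: "(\<And>i. b \<le> i \<Longrightarrow> i \<le> a \<Longrightarrow> e i * x = x * e i) \<Longrightarrow> desc_prod e a b * x = x * desc_prod e a b"
  unfolding desc_prod_def by (rule prod_list_comm) auto
lemma ap_comm: "(\<And>i. b \<le> i \<Longrightarrow> i \<le> a \<Longrightarrow> e i * x = x * e i) \<Longrightarrow> asc_prod e b a * x = x * asc_prod e b a"
  unfolding asc_prod_def by (rule prod_list_comm) auto

lemma grid_comm:
  assumes "\<And>i. a + 1 \<le> i \<Longrightarrow> i + 1 \<le> a + q + p \<Longrightarrow> e i * x = x * e i"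
  shows "grid e a p q * x = x * grid e a p q"
  unfolding grid_def
proof (rule prod_list_comm)
  fix y assume "y \<in> set (map (\<lambda>r. desc_prod e (a + q + r) (a + 1 + r)) [0..<p])"
  then obtain r where r: "r < p" "y = desc_prod e (a + q + r) (a + 1 + r)" by auto
  show "y * x = x * y" unfolding r(2) by (rule dp_comm) (use r(1) assms in auto)
qed

lemma grid_G1: "grid e a (Suc p) q = desc_prod e (a + q) (a + 1) * grid e (Suc a) p q"
proof -
  have "[0..<Suc p] = 0 # map Suc [0..<p]" by (simp add: upt_conv_Cons map_Suc_upt)
  moreover have "(\<lambda>r. desc_prod e (a + q + r) (a + 1 + r)) \<circ> Suc = (\<lambda>r. desc_prod e (Suc a + q + r) (Suc a + 1 + r))"
    by (rule ext) simp
  ultimately show ?thesis unfolding grid_def by simp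
qed

lemma grid_G2: "grid e a (Suc p) q = grid e a p q * desc_prod e (a + q + p) (a + 1 + p)"
  unfolding grid_def by simp

lemma grid_zero: "grid e a 0 q = 1" unfolding grid_def by simp

lemma grid_2: "grid e a 2 q = desc_prod e (a + q) (a + 1) * desc_prod e (a + q + 1) (a + 2)"
  unfolding grid_def by (simp add: numeral_2_eq_2)

lemma grid_one: "grid e a 1 1 = e (Suc a)"
  unfolding grid_def by (simp add: dp_single)



context mt begin

definition sc :: "real \<Rightarrow> 'a \<Rightarrow> 'a" where "sc r x = sm (complex_of_real r) x"
abbreviation "\<iota> \<equiv> 1 / d"

lemma sc_sc: "sc r (sc s x) = sc (r * s) x" unfolding sc_def by (simp add: sm_sm[OF SA])
lemma sc_ml: "sc r x * y = sc r (x * y)" unfolding sc_def by (simp add: sm_ml[OF SA])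
lemma sc_mr: "x * sc r y = sc r (x * y)" unfolding sc_def by (simp add: sm_mr[OF SA])
lemma sc_1: "sc 1 x = x" unfolding sc_def by (simp add: sm_one[OF SA])
lemma iota2: "1 / d\<^sup>2 = \<iota>^2" by (simp add: power_one_over)

lemma TL1s: "i \<ge> 1 \<Longrightarrow> e i * e (Suc i) * e i = sc (\<iota>^2) (e i)"
  unfolding sc_def iota2[symmetric] by (rule TL1)
lemma TL2s: "i \<ge> 1 \<Longrightarrow> e (Suc i) * e i * e (Suc i) = sc (\<iota>^2) (e (Suc i))"
  unfolding sc_def iota2[symmetric] by (rule TL2)
lemma TL1': "i \<ge> 1 \<Longrightarrow> e i * (e (Suc i) * (e i * x)) = sc (\<iota>^2) (e i * x)"
  using TL1s[of i] by (simp add: mult.assoc[symmetric] sc_ml)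
lemma TL2': "i \<ge> 1 \<Longrightarrow> e (Suc i) * (e i * (e (Suc i) * x)) = sc (\<iota>^2) (e (Suc i) * x)"
  using TL2s[of i] by (simp add: mult.assoc[symmetric] sc_ml)
lemma e_idem': "i \<ge> 1 \<Longrightarrow> e i * (e i * x) = e i * x"
  using e_idem[of i] by (simp add: mult.assoc[symmetric])
lemma e_comm': "i \<ge> 1 \<Longrightarrow> j \<ge> 1 \<Longrightarrow> i + 1 < j \<or> j + 1 < i \<Longrightarrow> e i * e j = e j * e i"
  using e_comm by metis
lemma e_comm'': "i \<ge> 1 \<Longrightarrow> j \<ge> 1 \<Longrightarrow> i + 1 < j \<or> j + 1 < i \<Longrightarrow> e i * (e j * x) = e j * (e i * x)"
  using e_comm'[of i j] by (simp add: mult.assoc[symmetric])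

lemma dp_M: "1 \<le> b \<Longrightarrow> a < n \<Longrightarrow> desc_prod e a b \<in> M n"
  unfolding desc_prod_def by (rule M_prod_list) (auto intro: eM)
lemma ap_M: "1 \<le> b \<Longrightarrow> a < n \<Longrightarrow> asc_prod e b a \<in> M n"
  unfolding asc_prod_def by (rule M_prod_list) (auto intro: eM)
lemma grid_M: "a + q + p \<le> n \<Longrightarrow> grid e a p q \<in> M n"
  unfolding grid_def by (rule M_prod_list) (auto intro!: dp_M)

lemma dp_commM: "x \<in> M p \<Longrightarrow> p < b \<Longrightarrow> desc_prod e a b * x = x * desc_prod e a b"
  by (rule dp_comm) (rule F2g, auto)
lemma ap_commM: "x \<in> M p \<Longrightarrow> p < b \<Longrightarrow> asc_prod e b a * x = x * asc_prod e b a"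
  by (rule ap_comm) (rule F2g, auto)
lemma grid_commM: "x \<in> M p \<Longrightarrow> p \<le> a \<Longrightarrow> grid e a l q * x = x * grid e a l q"
  by (rule grid_comm) (rule F2g, auto)

lemma dp_comm_e: "1 \<le> b \<Longrightarrow> 1 \<le> j \<Longrightarrow> a + 2 \<le> j \<or> j + 2 \<le> b \<Longrightarrow> desc_prod e a b * e j = e j * desc_prod e a b"
  by (rule dp_comm, rule e_comm') auto
lemma ap_comm_e: "1 \<le> b \<Longrightarrow> 1 \<le> j \<Longrightarrow> a + 2 \<le> j \<or> j + 2 \<le> b \<Longrightarrow> asc_prod e b a * e j = e j * asc_prod e b a"
  by (rule ap_comm, rule e_comm') auto
lemma grid_comm_e: "1 \<le> j \<Longrightarrow> a + q + p + 1 \<le> j \<Longrightarrow> grid e a p q * e j = e j * grid e a p q"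
  by (rule grid_comm, rule e_comm') auto

lemma star_prod_list: "star (prod_list xs) = prod_list (rev (map star xs))"
  by (induction xs) (simp_all add: star_one[OF SA] star_mult[OF SA])

lemma star_dp: "1 \<le> b \<Longrightarrow> star (desc_prod e a b) = asc_prod e b a"
proof -
  assume b: "1 \<le> b"
  have "map star (map e (rev [b..<Suc a])) = map e (rev [b..<Suc a])"
    unfolding map_map
  proof (rule map_cong)
    fix i assume "i \<in> set (rev [b..<Suc a])"
    then have "i \<ge> 1" using b by auto
    then show "(star \<circ> e) i = e i" by (simp add: e_star)
  qed simp
  then show ?thesis unfolding desc_prod_def asc_prod_def star_prod_list by (simp only: rev_map rev_rev_ident)
qed
lemma star_ap: "1 \<le> b \<Longrightarrow> star (asc_prod e b a) = desc_prod e a b"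
  using star_dp[of b a] star_star[OF SA] by metis

lemma zigzag:
  assumes p1: "1 \<le> p" and pq: "p \<le> q"
  shows "desc_prod e q p * asc_prod e p q = sc (\<iota>^(2 * (q - p))) (e q)"
  using pq
proof (induction q rule: dec_induct)
  case base
  show ?case using p1 by (simp add: dp_single ap_single e_idem sc_1)
next
  case (step q)
  have "desc_prod e (Suc q) p * asc_prod e p (Suc q) = e (Suc q) * (desc_prod e q p * asc_prod e p q) * e (Suc q)"
    using step(1) by (simp add: dp_Suc ap_Suc mult.assoc)
  also have "\<dots> = sc (\<iota>^(2 * (q - p))) (e (Suc q) * e q * e (Suc q))"
    by (simp only: step(3)) (simp add: sc_ml sc_mr mult.assoc)
  also have "\<dots> = sc (\<iota>^(2 * (Suc q - p))) (e (Suc q))"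
  proof -
    have "q \<ge> 1" using step p1 by simp
    then have "sc (\<iota>^(2 * (q - p))) (e (Suc q) * e q * e (Suc q)) = sc (\<iota>^(2 * (q - p)) * \<iota>^2) (e (Suc q))"
      using TL2s[of q] by (simp add: sc_sc)
    moreover have "\<iota>^(2 * (q - p)) * \<iota>^2 = \<iota>^(2 * (Suc q - p))"
      using step by (simp add: Suc_diff_le power_add[symmetric])
    ultimately show ?thesis by simp
  qed
  finally show ?case .
qed

lemma ZZx:
  assumes p: "1 \<le> p" "p \<le> q" and x: "x \<in> M p"
  shows "desc_prod e q p * x * asc_prod e p q = sc (\<iota>^(2 * (q - p))) (E p x * e q)"
proof -
  have Ex: "E p x \<in> M (p - 1)" using E_prop(1)[OF p(1) x] .
  have "desc_prod e q p * x * asc_prod e p q = desc_prod e q (Suc p) * (e p * x * e p) * asc_prod e (Suc p) q"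
    using p by (simp add: dp_low ap_low mult.assoc)
  also have "\<dots> = desc_prod e q (Suc p) * (E p x * e p) * asc_prod e (Suc p) q"
    using M2E[OF p(1) x] by simp
  also have "\<dots> = E p x * (desc_prod e q (Suc p) * e p * asc_prod e (Suc p) q)"
    using dp_commM[OF Ex, of "Suc p" q] p by (simp add: mult.assoc[symmetric])
  also have "desc_prod e q (Suc p) * e p * asc_prod e (Suc p) q = desc_prod e q p * asc_prod e p q"
    using p by (simp add: dp_low ap_low mult.assoc e_idem')
  also have "\<dots> = sc (\<iota>^(2 * (q - p))) (e q)" using zigzag[OF p] .
  finally show ?thesis by (simp add: sc_mr)
qed

end



lemma comm_l: "(x::'a::monoid_mult) * y = y * x \<Longrightarrow> x * (y * z) = y * (x * z)"
  by (metis mult.assoc)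

context mt begin

lemma grid_G3: "grid e a p (Suc q) = asc_prod e (a + q + 1) (a + q + p) * grid e a p q"
proof (induction p)
  case 0 then show ?case by (simp add: grid_zero ap_empty[of e "a + q", simplified])
next
  case (Suc p)
  have "grid e a (Suc p) (Suc q) = grid e a p (Suc q) * desc_prod e (Suc (a + q + p)) (a + 1 + p)"
    by (simp add: grid_G2)
  also have "\<dots> = asc_prod e (a + q + 1) (a + q + p) * (grid e a p q * e (Suc (a + q + p))) * desc_prod e (a + q + p) (a + 1 + p)"
    using Suc by (simp add: dp_Suc mult.assoc)
  also have "grid e a p q * e (Suc (a + q + p)) = e (Suc (a + q + p)) * grid e a p q"
    by (rule grid_comm_e) auto
  also have "asc_prod e (a + q + 1) (a + q + p) * (e (Suc (a + q + p)) * grid e a p q) * desc_prod e (a + q + p) (a + 1 + p)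
     = (asc_prod e (a + q + 1) (a + q + p) * e (Suc (a + q + p))) * (grid e a p q * desc_prod e (a + q + p) (a + 1 + p))"
    by (simp add: mult.assoc)
  also have "asc_prod e (a + q + 1) (a + q + p) * e (Suc (a + q + p)) = asc_prod e (a + q + 1) (a + q + Suc p)"
    by (simp add: ap_Suc)
  also have "grid e a p q * desc_prod e (a + q + p) (a + 1 + p) = grid e a (Suc p) q"
    by (simp add: grid_G2)
  finally show ?case .
qed

lemma grid_RD: "grid e a (Suc l) (Suc l) = asc_prod e (Suc (a + l)) (a + 2 * l) * grid e a l l * desc_prod e (Suc (a + 2 * l)) (Suc (a + l))"
proof -
  have "grid e a (Suc l) (Suc l) = grid e a l (Suc l) * desc_prod e (a + Suc l + l) (a + 1 + l)"
    by (simp add: grid_G2)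
  also have "grid e a l (Suc l) = asc_prod e (a + l + 1) (a + l + l) * grid e a l l"
    by (rule grid_G3)
  finally show ?thesis by (simp add: mult_2 add.assoc)
qed

lemma grid_CD: "grid e a (Suc l) (Suc l) = asc_prod e (Suc (a + l)) (Suc (a + 2 * l)) * desc_prod e (a + l) (a + 1) * grid e (Suc a) l l"
proof -
  have "grid e a (Suc l) (Suc l) = asc_prod e (a + l + 1) (a + l + Suc l) * grid e a (Suc l) l"
    by (rule grid_G3)
  also have "grid e a (Suc l) l = desc_prod e (a + l) (a + 1) * grid e (Suc a) l l"
    by (rule grid_G1)
  finally show ?thesis by (simp add: mult_2 mult.assoc add.assoc)
qed

lemma grid_star: "star (grid e a l l) = grid e a l l"
proof (induction l)
  case 0 then show ?case by (simp add: grid_zero star_one[OF SA])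
next
  case (Suc l)
  define A where "A = asc_prod e (Suc (a + l)) (a + 2 * l)"
  define V where "V = desc_prod e (Suc (a + 2 * l)) (Suc (a + l))"
  define W0 where "W0 = grid e a l l"
  have W: "grid e a (Suc l) (Suc l) = A * W0 * V" unfolding A_def V_def W0_def by (rule grid_RD)
  have sA: "star A = desc_prod e (a + 2 * l) (Suc (a + l))" unfolding A_def by (simp add: star_ap)
  have sV: "star V = asc_prod e (Suc (a + l)) (Suc (a + 2 * l))" unfolding V_def by (simp add: star_dp)
  have sV2: "star V = A * e (Suc (a + 2 * l))" unfolding sV A_def by (simp add: ap_Suc)
  have cW: "e (Suc (a + 2 * l)) * W0 = W0 * e (Suc (a + 2 * l))"
    unfolding W0_def by (rule grid_comm_e[symmetric]) auto
  have V2: "e (Suc (a + 2 * l)) * desc_prod e (a + 2 * l) (Suc (a + l)) = V"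
    unfolding V_def by (simp add: dp_Suc)
  have "star (grid e a (Suc l) (Suc l)) = star V * star W0 * star A"
    unfolding W by (simp add: star_mult[OF SA] mult.assoc)
  also have "\<dots> = A * (e (Suc (a + 2 * l)) * W0) * desc_prod e (a + 2 * l) (Suc (a + l))"
    unfolding sV2 sA using Suc unfolding W0_def by (simp add: mult.assoc)
  also have "\<dots> = A * W0 * V"
    unfolding cW V2[symmetric] by (simp add: mult.assoc)
  finally show ?case unfolding W .
qed

end



context mt begin

lemma mirror:
  assumes "2 \<le> p"
  shows "e (a + s + 1) * grid e a p (s + p) = e (a + s + 2 * p - 1) * grid e a p (s + p)"
  using assms
proof (induction p arbitrary: a s rule: dec_induct)
  case base
  define i where "i = Suc (a + s)"
  have i1: "i \<ge> 1" unfolding i_def by simp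
  define D1 where "D1 = desc_prod e (a + s) (Suc a)"
  define D2 where "D2 = desc_prod e i (Suc (Suc a))"
  have g: "grid e a 2 (s + 2) = e (Suc i) * (e i * (D1 * (e (Suc (Suc i)) * (e (Suc i) * D2))))"
    unfolding grid_2 i_def D1_def D2_def by (simp add: dp_Suc mult.assoc)
  have c1: "D1 * e (Suc (Suc i)) = e (Suc (Suc i)) * D1"
    unfolding D1_def i_def by (rule dp_comm_e) auto
  have c2: "e i * e (Suc (Suc i)) = e (Suc (Suc i)) * e i"
    using i1 by (intro e_comm') auto
  have L: "e i * grid e a 2 (s + 2) = sc (\<iota>^2) (e (Suc (Suc i)) * (e i * (D1 * (e (Suc i) * D2))))"
  proof -
    have "e i * grid e a 2 (s + 2) = sc (\<iota>^2) (e i * (D1 * (e (Suc (Suc i)) * (e (Suc i) * D2))))"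
      unfolding g using TL1'[OF i1] by simp
    also have "e i * (D1 * (e (Suc (Suc i)) * (e (Suc i) * D2))) = e (Suc (Suc i)) * (e i * (D1 * (e (Suc i) * D2)))"
      using c1 c2 by (metis mult.assoc)
    finally show ?thesis .
  qed
  have R: "e (Suc (Suc i)) * grid e a 2 (s + 2) = sc (\<iota>^2) (e (Suc (Suc i)) * (e i * (D1 * (e (Suc i) * D2))))"
  proof -
    have "e (Suc (Suc i)) * grid e a 2 (s + 2) = e (Suc (Suc i)) * (e (Suc i) * (e i * (D1 * (e (Suc (Suc i)) * (e (Suc i) * D2)))))"
      unfolding g ..
    also have "e i * (D1 * (e (Suc (Suc i)) * (e (Suc i) * D2))) = e (Suc (Suc i)) * (e i * (D1 * (e (Suc i) * D2)))"
      using c1 c2 by (metis mult.assoc)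
    also have "e (Suc (Suc i)) * (e (Suc i) * (e (Suc (Suc i)) * (e i * (D1 * (e (Suc i) * D2))))) = sc (\<iota>^2) (e (Suc (Suc i)) * (e i * (D1 * (e (Suc i) * D2))))"
      using TL2'[of "Suc i"] by simp
    finally show ?thesis .
  qed
  have idx: "a + s + 1 = i" "a + s + 2 * 2 - 1 = Suc (Suc i)" unfolding i_def by simp_all
  show ?case unfolding idx by (simp only: L R)
next
  case (step p)
  define i where "i = Suc (a + s)"
  have i1: "i \<ge> 1" unfolding i_def by simp
  have p2: "2 \<le> p" using step by simp
  define D1 where "D1 = desc_prod e (a + s) (Suc a)"
  define G' where "G' = grid e (Suc a) p (s + Suc p)"
  have IH: "e (Suc (Suc i)) * G' = e (i + 2 * p) * G'"
  proof -
    have "e (Suc a + Suc s + 1) * grid e (Suc a) p (Suc s + p) = e (Suc a + Suc s + 2 * p - 1) * grid e (Suc a) p (Suc s + p)"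
      by (rule step(3))
    moreover have "Suc a + Suc s + 1 = Suc (Suc i)" "Suc a + Suc s + 2 * p - 1 = i + 2 * p" "Suc s + p = s + Suc p"
      unfolding i_def using p2 by simp_all
    ultimately show ?thesis unfolding G'_def by metis
  qed
  have G: "grid e a (Suc p) (s + Suc p) = desc_prod e (i + p) (Suc a) * G'"
    unfolding G'_def grid_G1 i_def by (simp add: add.assoc)
  have F1: "desc_prod e (i + p) (Suc a) = desc_prod e (i + p) (Suc (Suc i)) * (e (Suc i) * (e i * D1))"
  proof -
    have "desc_prod e (i + p) (Suc a) = desc_prod e (i + p) (Suc (Suc i)) * desc_prod e (Suc i) (Suc a)"
      by (rule dp_split) (use p2 i_def in auto)
    moreover have "desc_prod e (Suc i) (Suc a) = e (Suc i) * (e i * D1)"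
      unfolding D1_def i_def by (simp add: dp_Suc)
    ultimately show ?thesis by simp
  qed
  have F2: "desc_prod e (i + p) (Suc (Suc i)) = desc_prod e (i + p) (Suc (Suc (Suc i))) * e (Suc (Suc i))"
    by (rule dp_low) (use p2 in auto)
  have cA: "e i * desc_prod e (i + p) (Suc (Suc i)) = desc_prod e (i + p) (Suc (Suc i)) * e i"
    by (rule dp_comm_e[symmetric]) (use i1 in auto)
  have cB: "desc_prod e (i + p) (Suc a) * e (i + 2 * p) = e (i + 2 * p) * desc_prod e (i + p) (Suc a)"
    by (rule dp_comm_e) (use p2 i1 in auto)
  have cC: "D1 * e (Suc (Suc i)) = e (Suc (Suc i)) * D1"
    unfolding D1_def i_def by (rule dp_comm_e) auto
  have cD: "e i * e (Suc (Suc i)) = e (Suc (Suc i)) * e i"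
    using i1 by (intro e_comm') auto
  have L: "e i * grid e a (Suc p) (s + Suc p) = sc (\<iota>^2) (desc_prod e (i + p) (Suc (Suc i)) * (e i * (D1 * G')))"
  proof -
    have "e i * grid e a (Suc p) (s + Suc p) = (e i * desc_prod e (i + p) (Suc (Suc i))) * (e (Suc i) * (e i * (D1 * G')))"
      unfolding G F1 by (simp add: mult.assoc)
    also have "\<dots> = desc_prod e (i + p) (Suc (Suc i)) * (e i * (e (Suc i) * (e i * (D1 * G'))))"
      unfolding cA by (simp add: mult.assoc)
    also have "\<dots> = sc (\<iota>^2) (desc_prod e (i + p) (Suc (Suc i)) * (e i * (D1 * G')))"
      using TL1'[OF i1] by (simp add: sc_mr)
    finally show ?thesis .
  qed
  have R: "e (i + 2 * p) * grid e a (Suc p) (s + Suc p) = sc (\<iota>^2) (desc_prod e (i + p) (Suc (Suc i)) * (e i * (D1 * G')))"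
  proof -
    have "e (i + 2 * p) * grid e a (Suc p) (s + Suc p) = desc_prod e (i + p) (Suc a) * (e (i + 2 * p) * G')"
      unfolding G by (simp add: cB[symmetric] mult.assoc[symmetric])
    also have "\<dots> = desc_prod e (i + p) (Suc a) * (e (Suc (Suc i)) * G')"
      unfolding IH ..
    also have "\<dots> = desc_prod e (i + p) (Suc (Suc (Suc i))) * (e (Suc (Suc i)) * (e (Suc i) * (e i * (D1 * (e (Suc (Suc i)) * G')))))"
      unfolding F1 F2 by (simp add: mult.assoc)
    also have "e i * (D1 * (e (Suc (Suc i)) * G')) = e (Suc (Suc i)) * (e i * (D1 * G'))"
      using cC cD by (metis mult.assoc)
    also have "e (Suc (Suc i)) * (e (Suc i) * (e (Suc (Suc i)) * (e i * (D1 * G')))) = sc (\<iota>^2) (e (Suc (Suc i)) * (e i * (D1 * G')))"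
      using TL2'[of "Suc i"] by simp
    also have "desc_prod e (i + p) (Suc (Suc (Suc i))) * sc (\<iota>^2) (e (Suc (Suc i)) * (e i * (D1 * G'))) = sc (\<iota>^2) (desc_prod e (i + p) (Suc (Suc i)) * (e i * (D1 * G')))"
      unfolding F2 by (simp add: sc_mr mult.assoc)
    finally show ?thesis .
  qed
  have idx: "a + s + 1 = i" "a + s + 2 * Suc p - 1 = i + 2 * p" unfolding i_def by simp_all
  show ?case unfolding idx by (simp only: L R)
qed

lemma mirror_sq:
  assumes "2 \<le> l"
  shows "e (a + 1) * grid e a l l = e (a + 2 * l - 1) * grid e a l l"
  using mirror[OF assms, of a 0] by simp

end



context mt begin

lemma sc_M: "x \<in> M n \<Longrightarrow> sc r x \<in> M n" unfolding sc_def by (rule M_sm)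
lemma tr_sc: "x \<in> M n \<Longrightarrow> tr n (sc r x) = complex_of_real r * tr n x" unfolding sc_def by (rule tr_sm')

fun Ec :: "nat \<Rightarrow> nat \<Rightarrow> 'a \<Rightarrow> 'a" where
  "Ec a 0 x = x"
| "Ec a (Suc n) x = Ec a n (E (a + Suc n) x)"

lemma Ec_prop:
  "x \<in> M (a + n) \<Longrightarrow> Ec a n x \<in> M a \<and> (\<forall>z\<in>M a. tr (a + n) (Ec a n x * z) = tr (a + n) (x * z))"
proof (induction n arbitrary: x)
  case 0 then show ?case by simp
next
  case (Suc n)
  have n1: "a + Suc n \<ge> 1" by simp
  have yM: "E (a + Suc n) x \<in> M (a + n)" using E_prop(1)[OF n1 Suc.prems] by simp
  have yP: "\<forall>z\<in>M (a + n). tr (a + Suc n) (E (a + Suc n) x * z) = tr (a + Suc n) (x * z)"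
    using E_prop(2)[OF n1 Suc.prems] by simp
  have IH: "Ec a n (E (a + Suc n) x) \<in> M a \<and> (\<forall>z\<in>M a. tr (a + n) (Ec a n (E (a + Suc n) x) * z) = tr (a + n) (E (a + Suc n) x * z))"
    using Suc.IH[OF yM] .
  have "tr (a + Suc n) (Ec a (Suc n) x * z) = tr (a + Suc n) (x * z)" if z: "z \<in> M a" for z
  proof -
    have zn: "z \<in> M (a + n)" using Mmono'[OF z] by simp
    have "tr (a + Suc n) (Ec a (Suc n) x * z) = tr (a + n) (Ec a n (E (a + Suc n) x) * z)"
      using tr_lift[of "a + n" "a + Suc n"] M_mult IH Mmono'[of _ a "a + n"] z by simp
    also have "\<dots> = tr (a + n) (E (a + Suc n) x * z)" using IH z by blast
    also have "\<dots> = tr (a + Suc n) (E (a + Suc n) x * z)"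
      using tr_lift[of "a + n" "a + Suc n"] M_mult[OF yM zn] by simp
    also have "\<dots> = tr (a + Suc n) (x * z)" using yP zn by blast
    finally show ?thesis .
  qed
  then show ?case using IH by simp
qed

lemma Ec_M: "x \<in> M (a + n) \<Longrightarrow> Ec a n x \<in> M a" using Ec_prop by blast

lemma Ec_one: "Ec a n 1 = 1"
  by (induction n) (simp_all add: E_id M_one)

lemma Ec_cexp: "x \<in> M (a + n) \<Longrightarrow> cexp (tr (a + n)) (M a) x = Ec a n x"
  using Ec_prop[of x a n] by (intro cexp_genI) auto

lemma M2W:
  assumes l: "l \<ge> 1" and x: "x \<in> M (a + l)"
  shows "grid e a l l * x * grid e a l l = sc (\<iota>^(l * (l - 1))) (Ec a l x * grid e a l l)"
  using l x
proof (induction l arbitrary: x rule: dec_induct)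
  case base
  have "e (Suc a) * x * e (Suc a) = E (Suc a) x * e (Suc a)" using M2E[of "Suc a" x] base by simp
  then show ?case by (simp add: grid_one[simplified] sc_1)
next
  case (step l)
  define m where "m = Suc (a + 2 * l)"
  have m1: "m \<ge> 1" unfolding m_def by simp
  define A where "A = asc_prod e (Suc (a + l)) (a + 2 * l)"
  define W0 where "W0 = grid e a l l"
  define D2 where "D2 = desc_prod e (a + 2 * l) (Suc (a + l))"
  define x' where "x' = E (Suc (a + l)) x"
  have xM: "x \<in> M (Suc (a + l))" using step by simp
  have x'M: "x' \<in> M (a + l)" unfolding x'_def using E_prop(1)[of "Suc (a + l)" x] xM by simp
  have W: "grid e a (Suc l) (Suc l) = A * W0 * (e m * D2)"
    unfolding A_def W0_def D2_def m_def grid_RD by (simp add: dp_Suc)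
  have ZZ: "D2 * x * A = sc (\<iota>^(2 * (l - 1))) (x' * e (a + 2 * l))"
  proof -
    have "D2 * x * A = sc (\<iota>^(2 * (a + 2 * l - Suc (a + l)))) (E (Suc (a + l)) x * e (a + 2 * l))"
      unfolding D2_def A_def by (rule ZZx) (use step xM in auto)
    moreover have "a + 2 * l - Suc (a + l) = l - 1" by simp
    ultimately show ?thesis unfolding x'_def by simp
  qed
  have c1: "e m * x' = x' * e m" by (rule F2g[OF m1 x'M]) (simp add: m_def)
  have c2: "W0 * e m = e m * W0" unfolding W0_def m_def by (rule grid_comm_e) auto
  have c2': "e m * (W0 * y) = W0 * (e m * y)" for y using c2 by (metis mult.assoc)
  have tl: "e m * (e (a + 2 * l) * (e m * y)) = sc (\<iota>^2) (e m * y)" for y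
    using TL2'[of "a + 2 * l" y] step unfolding m_def by simp
  have IH: "W0 * x' * W0 = sc (\<iota>^(l * (l - 1))) (Ec a l x' * W0)"
    unfolding W0_def using step.IH[OF x'M] .
  have EcM: "Ec a l x' \<in> M a" using Ec_M x'M by simp
  have c3: "A * Ec a l x' = Ec a l x' * A"
    unfolding A_def by (rule ap_commM[OF EcM]) simp
  have c3': "A * (Ec a l x' * y) = Ec a l x' * (A * y)" for y using c3 by (metis mult.assoc)
  have "grid e a (Suc l) (Suc l) * x * grid e a (Suc l) (Suc l) = A * W0 * e m * (D2 * x * A) * W0 * (e m * D2)"
    unfolding W by (simp add: mult.assoc)
  also have "\<dots> = sc (\<iota>^(2 * (l - 1))) (A * W0 * (e m * x') * (e (a + 2 * l) * (W0 * e m)) * D2)"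
    unfolding ZZ by (simp add: sc_ml sc_mr mult.assoc)
  also have "\<dots> = sc (\<iota>^(2 * (l - 1))) (A * W0 * x' * (e m * (e (a + 2 * l) * (e m * (W0 * D2)))))"
    unfolding c1 c2 by (simp add: mult.assoc)
  also have "\<dots> = sc (\<iota>^(2 * (l - 1)) * \<iota>^2) (A * (W0 * x' * W0) * (e m * D2))"
    unfolding tl by (simp add: sc_sc sc_mr c2' mult.assoc)
  also have "\<dots> = sc (\<iota>^(2 * (l - 1)) * \<iota>^2 * \<iota>^(l * (l - 1))) (Ec a l x' * (A * W0 * (e m * D2)))"
    unfolding IH by (simp add: sc_sc sc_ml sc_mr c3' mult.assoc)
  also have "\<iota>^(2 * (l - 1)) * \<iota>^2 * \<iota>^(l * (l - 1)) = \<iota>^(Suc l * (Suc l - 1))"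
  proof -
    have "2 * (l - 1) + 2 + l * (l - 1) = Suc l * (Suc l - 1)" using step
      by (cases l) (auto simp: algebra_simps)
    then show ?thesis by (metis power_add)
  qed
  finally show ?case unfolding W x'_def by simp
qed

lemma W_idem:
  assumes "l \<ge> 1"
  shows "grid e a l l * grid e a l l = sc (\<iota>^(l * (l - 1))) (grid e a l l)"
  using M2W[OF assms M_one] by (simp add: Ec_one)

lemma Markov_W:
  assumes l: "l \<ge> 1" and z: "z \<in> M (a + l)" and T: "a + 2 * l \<le> T"
  shows "tr T (grid e a l l * z) = complex_of_real (\<iota>^(l * (l + 1))) * tr T z"
  using l z T
proof (induction l arbitrary: z rule: dec_induct)
  case base
  have "tr T (e (Suc a) * z) = (1 / d\<^sup>2) * tr T z" using F1(1)[of "Suc a" z T] base by simp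
  then show ?case by (simp add: grid_one[simplified] power_one_over power2_eq_square)
next
  case (step l)
  define m where "m = Suc (a + 2 * l)"
  have m1: "m \<ge> 1" unfolding m_def by simp
  define A where "A = asc_prod e (Suc (a + l)) (a + 2 * l)"
  define W0 where "W0 = grid e a l l"
  define D2 where "D2 = desc_prod e (a + 2 * l) (Suc (a + l))"
  define z' where "z' = E (Suc (a + l)) z"
  have zM: "z \<in> M (Suc (a + l))" using step by simp
  have z'M: "z' \<in> M (a + l)" unfolding z'_def using E_prop(1)[of "Suc (a + l)" z] zM by simp
  have W: "grid e a (Suc l) (Suc l) = A * W0 * (e m * D2)"
    unfolding A_def W0_def D2_def m_def grid_RD by (simp add: dp_Suc)
  have ZZ: "D2 * z * A = sc (\<iota>^(2 * (l - 1))) (z' * e (a + 2 * l))"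
  proof -
    have "D2 * z * A = sc (\<iota>^(2 * (a + 2 * l - Suc (a + l)))) (E (Suc (a + l)) z * e (a + 2 * l))"
      unfolding D2_def A_def by (rule ZZx) (use step zM in auto)
    moreover have "a + 2 * l - Suc (a + l) = l - 1" by simp
    ultimately show ?thesis unfolding z'_def by simp
  qed
  have TT: "Suc m \<le> T" using step unfolding m_def by simp
  have AM: "A \<in> M m" unfolding A_def m_def by (rule ap_M) auto
  have W0M: "W0 \<in> M m" unfolding W0_def m_def by (rule grid_M) auto
  have W0M': "W0 \<in> M (a + 2 * l)" unfolding W0_def by (rule grid_M) auto
  have D2M: "D2 \<in> M m" unfolding D2_def m_def by (rule dp_M) auto
  have zMm: "z \<in> M m" using Mmono'[OF zM] unfolding m_def by simp
  have z'Mm: "z' \<in> M (a + 2 * l)" using Mmono'[OF z'M] by simp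
  have emM: "e m \<in> M T" using eM[OF m1] TT by simp
  have MT': "M m \<subseteq> M T" using Mmono TT by simp
  have ea2M: "e (a + 2 * l) \<in> M (a + 2 * l + 1)" using eM[of "a + 2 * l"] step by simp
  have "tr T (grid e a (Suc l) (Suc l) * z) = tr T ((A * W0 * e m) * (D2 * z))"
    unfolding W by (simp add: mult.assoc)
  also have "\<dots> = tr T ((D2 * z * A * W0) * e m)"
    using tr_comm'[of "A * W0 * e m" T "D2 * z"] AM W0M D2M zMm emM MT' M_mult
    by (simp add: subsetD mult.assoc)
  also have "\<dots> = (1 / d\<^sup>2) * tr T (D2 * z * A * W0)"
    by (rule F1(2)) (use m1 TT AM W0M D2M zMm M_mult in auto)
  also have "D2 * z * A * W0 = sc (\<iota>^(2 * (l - 1))) (z' * e (a + 2 * l) * W0)"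
    unfolding ZZ by (simp add: sc_ml)
  also have "tr T (sc (\<iota>^(2 * (l - 1))) (z' * e (a + 2 * l) * W0)) = complex_of_real (\<iota>^(2 * (l - 1))) * tr T (z' * e (a + 2 * l) * W0)"
    by (rule tr_sc) (use z'Mm ea2M W0M' Mmono'[of _ _ T] step M_mult in auto)
  also have "tr T (z' * e (a + 2 * l) * W0) = tr T ((W0 * z') * e (a + 2 * l))"
  proof -
    have "z' * e (a + 2 * l) \<in> M T" using z'Mm ea2M Mmono'[of _ _ T] step M_mult by auto
    moreover have "W0 \<in> M T" using W0M' Mmono'[of _ _ T] step by auto
    ultimately show ?thesis using tr_comm'[of "z' * e (a + 2 * l)" T W0] by (simp add: mult.assoc)
  qed
  also have "\<dots> = (1 / d\<^sup>2) * tr T (W0 * z')"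
    by (rule F1(2)) (use step W0M' z'Mm M_mult in auto)
  also have "tr T (W0 * z') = complex_of_real (\<iota>^(l * (l + 1))) * tr T z'"
    unfolding W0_def using step.IH[OF z'M] step by simp
  also have "tr T z' = tr T z"
  proof -
    have "tr (Suc (a + l)) z' = tr (Suc (a + l)) z" unfolding z'_def by (rule E_tr) (use zM in auto)
    moreover have "tr T z' = tr (Suc (a + l)) z'" using tr_lift[of "Suc (a + l)" T z'] z'M Mmono' step by simp
    moreover have "tr T z = tr (Suc (a + l)) z" using tr_lift[of "Suc (a + l)" T z] zM step by simp
    ultimately show ?thesis by simp
  qed
  finally have eq: "tr T (grid e a (Suc l) (Suc l) * z) = (1 / d\<^sup>2) * (complex_of_real (\<iota>^(2 * (l - 1))) * ((1 / d\<^sup>2) * (complex_of_real (\<iota>^(l * (l + 1))) * tr T z)))" .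
  have "(1 / d\<^sup>2) * (\<iota>^(2 * (l - 1)) * ((1 / d\<^sup>2) * \<iota>^(l * (l + 1)))) = \<iota>^(Suc l * (Suc l + 1))"
  proof -
    have "2 + (2 * (l - 1) + (2 + l * (l + 1))) = Suc l * (Suc l + 1)" using step
      by (cases l) (auto simp: algebra_simps)
    then have "\<iota>^2 * (\<iota>^(2 * (l - 1)) * (\<iota>^2 * \<iota>^(l * (l + 1)))) = \<iota>^(Suc l * (Suc l + 1))"
      by (metis power_add)
    then show ?thesis by (simp add: power_one_over)
  qed
  then show ?case unfolding eq by (metis (no_types, lifting) mult.assoc of_real_mult of_real_divide of_real_1 of_real_power)
qed

end



context mt begin

lemma grid_CD2: "grid e a (Suc l) (Suc l) = grid e (Suc a) l l * (asc_prod e (a + 1) (a + l) * desc_prod e (Suc (a + 2 * l)) (Suc (a + l)))"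
proof -
  have "grid e a (Suc l) (Suc l) = star (grid e a (Suc l) (Suc l))" by (simp add: grid_star)
  also have "\<dots> = star (asc_prod e (Suc (a + l)) (Suc (a + 2 * l)) * desc_prod e (a + l) (a + 1) * grid e (Suc a) l l)"
    by (simp only: grid_CD)
  also have "\<dots> = grid e (Suc a) l l * (asc_prod e (a + 1) (a + l) * desc_prod e (Suc (a + 2 * l)) (Suc (a + l)))"
    by (simp add: star_mult[OF SA] grid_star star_dp star_ap mult.assoc)
  finally show ?thesis .
qed

lemma absorb:
  assumes "l \<ge> 1"
  shows "grid e (Suc a) l l * grid e a (Suc l) (Suc l) = sc (\<iota>^(l * (l - 1))) (grid e a (Suc l) (Suc l))"
proof -
  define R where "R = asc_prod e (a + 1) (a + l) * desc_prod e (Suc (a + 2 * l)) (Suc (a + l))"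
  have "grid e (Suc a) l l * grid e a (Suc l) (Suc l) = (grid e (Suc a) l l * grid e (Suc a) l l) * R"
    unfolding grid_CD2 R_def by (simp add: mult.assoc)
  also have "\<dots> = sc (\<iota>^(l * (l - 1))) (grid e (Suc a) l l * R)"
    using W_idem[OF assms] by (simp add: sc_ml)
  finally show ?thesis unfolding grid_CD2 R_def .
qed

lemma dinv: "d ^ n * \<iota> ^ n = 1"
  using dpos by (simp add: power_one_over)

lemma M4W:
  assumes l: "l \<ge> 1" and x: "x \<in> M (a + 2 * l)"
  shows "\<exists>y\<in>M (a + l). x * grid e a l l = y * grid e a l l"
  using l x
proof (induction l arbitrary: a x rule: dec_induct)
  case base
  have "\<exists>y\<in>M (Suc a). x * e (Suc a) = y * e (Suc a)"
    by (rule M4') (use base in auto)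
  then show ?case by (simp add: grid_one[simplified])
next
  case (step l)
  define m where "m = Suc (a + 2 * l)"
  have m1: "m \<ge> 1" unfolding m_def by simp
  define L where "L = Suc l"
  define W where "W = grid e a L L"
  define W' where "W' = grid e (Suc a) l l"
  define A1 where "A1 = asc_prod e (Suc (a + l)) (a + 2 * l)"
  define P where "P = desc_prod e (a + l) (a + 1)"
  define \<kappa> where "\<kappa> = d ^ (L * (L - 1))"
  have xM: "x \<in> M (Suc m)" using step unfolding m_def by simp
  have WM: "W \<in> M (Suc m)" unfolding W_def m_def L_def by (rule grid_M) auto
  have A1M: "A1 \<in> M (Suc m)" unfolding A1_def m_def by (rule ap_M) auto
  have PM: "P \<in> M m" unfolding P_def m_def by (rule dp_M) auto
  have eaM: "e (a + 1) \<in> M m" unfolding m_def by (rule eM) (use step in auto)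
  have Widem: "W = sc \<kappa> (W * W)"
  proof -
    have "sc \<kappa> (W * W) = sc (\<kappa> * \<iota>^(L * (L - 1))) W"
      unfolding W_def using W_idem[of L a] by (simp add: L_def sc_sc)
    also have "\<kappa> * \<iota>^(L * (L - 1)) = 1" unfolding \<kappa>_def by (rule dinv)
    finally show ?thesis by (simp add: sc_1)
  qed
  have Wcol: "W = A1 * e m * P * W'"
    unfolding W_def L_def W'_def A1_def P_def m_def grid_CD by (simp add: ap_Suc)
  have abs: "W' * W = sc (\<iota>^(l * (l - 1))) W"
    unfolding W'_def W_def L_def using absorb step by simp
  have cP: "e m * P = P * e m" unfolding P_def m_def by (rule dp_comm_e[symmetric]) (use step in auto)
  have cP': "e m * (P * y) = P * (e m * y)" for y using cP by (metis mult.assoc)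
  have mir: "e m * W = e (a + 1) * W"
    using mirror_sq[of L a] step unfolding W_def L_def m_def by simp
  have "x * W = x * sc \<kappa> (W * W)" by (rule arg_cong[OF Widem])
  also have "\<dots> = sc \<kappa> (x * W * W)" by (simp add: sc_mr mult.assoc)
  also have "x * W * W = x * W * sc \<kappa> (W * W)" by (rule arg_cong[OF Widem])
  also have "\<dots> = sc \<kappa> (x * W * W * W)" by (simp add: sc_mr mult.assoc)
  also have "x * W * W * W = x * W * (A1 * e m * P * W') * W" by (rule arg_cong[OF Wcol, of "\<lambda>w. x * W * w * W"])
  also have "\<dots> = (x * W * A1) * e m * (P * (W' * W))"
    by (simp add: mult.assoc)
  finally have eq1: "x * W = sc (\<kappa> * \<kappa>) ((x * W * A1) * e m * (P * (W' * W)))" by (simp add: sc_sc)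
  obtain y1 where y1: "y1 \<in> M m" "(x * W * A1) * e m = y1 * e m"
    using M4'[OF m1, of "x * W * A1"] xM WM A1M M_mult by blast
  have "x * W = sc (\<kappa> * \<kappa>) (y1 * e m * (P * (W' * W)))" using eq1 y1(2) by simp
  also have "y1 * e m * (P * (W' * W)) = sc (\<iota>^(l * (l - 1))) (y1 * P * (e (a + 1) * W))"
    unfolding abs by (simp add: sc_mr mult.assoc cP' mir)
  finally have eq2: "x * W = sc (\<kappa> * \<kappa> * \<iota>^(l * (l - 1))) (y1 * P * e (a + 1)) * W"
    by (simp add: sc_sc sc_ml mult.assoc)
  define y2 where "y2 = sc (\<kappa> * \<kappa> * \<iota>^(l * (l - 1))) (y1 * P * e (a + 1))"
  have y2M: "y2 \<in> M (Suc a + 2 * l)"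
    unfolding y2_def using y1(1) PM eaM M_mult sc_M unfolding m_def by simp
  obtain y where y: "y \<in> M (Suc a + l)" "y2 * W' = y * W'"
    using step.IH[OF y2M] unfolding W'_def by blast
  have WW': "W = W' * (asc_prod e (a + 1) (a + l) * desc_prod e (Suc (a + 2 * l)) (Suc (a + l)))"
    unfolding W_def W'_def L_def by (rule grid_CD2)
  have "x * W = y * W"
    using eq2 y(2) unfolding y2_def[symmetric] WW' by (simp add: mult.assoc[symmetric])
  moreover have "y \<in> M (a + L)" using y(1) unfolding L_def by simp
  ultimately show ?case unfolding W_def L_def by blast
qed

end



context mt begin

lemma jw_grid: "jw_f sm e d i l = sc (d ^ (l * (l - 1))) (grid e i l l)"
  unfolding jw_f_def sc_def grid_def by simp

lemma tl_from:
  assumes pM: "p \<in> M T" and qM: "q \<in> M T" and pp: "p * p = p" and sp: "star p = p" and sq: "star q = q"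
    and qpq: "q * p * q = sc lam q" and trpq: "tr T (q * p) = complex_of_real lam * tr T p"
  shows "p * q * p = sc lam p"
proof -
  define z where "z = p * q * p - sc lam p"
  have zM: "z \<in> M T" unfolding z_def using pM qM M_mult M_diff sc_M by simp
  have sz: "star z = z"
    unfolding z_def using star_diff[OF SA] star_mult[OF SA] sp sq
    by (simp add: sc_def star_real[OF SA] mult.assoc)
  have pqpM: "p * q * p \<in> M T" using pM qM M_mult by simp
  have scd: "sc r (x - y) = sc r x - sc r y" for r x y unfolding sc_def by (rule sm_diff_r[OF SA])
  have "z * z = p * q * (p * p) * q * p - sc lam (p * q * (p * p)) - sc lam ((p * p) * q * p) + sc (lam * lam) (p * p)"
    unfolding z_def by (simp add: algebra_simps sc_ml sc_mr sc_sc scd)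
  also have "p * q * (p * p) * q * p = p * (q * p * q) * p" unfolding pp by (simp add: mult.assoc)
  also have "\<dots> = sc lam (p * q * p)" unfolding qpq by (simp add: sc_ml sc_mr mult.assoc)
  finally have "z * z = sc lam (p * q * p) - sc lam (p * q * p) - sc lam (p * q * p) + sc (lam * lam) p"
    unfolding pp by (simp add: mult.assoc)
  also have "\<dots> = sc (lam * lam) p - sc lam (p * q * p)" by simp
  finally have zz: "z * z = sc (lam * lam) p - sc lam (p * q * p)" .
  have t1: "tr T (p * q * p) = tr T (q * p)"
  proof -
    have "tr T (p * q * p) = tr T (p * (p * q))" using tr_comm'[of "p * q" T p] pM qM M_mult by simp
    also have "\<dots> = tr T (p * q)" by (simp add: mult.assoc[symmetric] pp)
    also have "\<dots> = tr T (q * p)" using tr_comm'[of p T q] pM qM by simp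
    finally show ?thesis .
  qed
  have "tr T (z * star z) = tr T (sc (lam * lam) p) - tr T (sc lam (p * q * p))"
    unfolding sz zz by (rule tr_diff') (use pM pqpM sc_M in auto)
  also have "\<dots> = 0"
    using tr_sc[OF pM] tr_sc[OF pqpM] t1 trpq by (simp add: algebra_simps)
  finally have "z = 0" using faithful' zM by blast
  then show ?thesis unfolding z_def by simp
qed


lemma new_tower:
  fixes j k :: nat
  assumes k: "k \<ge> 1"
  shows "markov_tower sm star (\<lambda>n. M (j + n * k)) (\<lambda>n. tr (j + n * k))
           (\<lambda>n. jw_f sm e d (j + (n - 1) * k) k) (d ^ k)"
proof -
  define M' where "M' = (\<lambda>n. M (j + n * k))"
  define tr' where "tr' = (\<lambda>n. tr (j + n * k))"
  define g where "g = (\<lambda>n. jw_f sm e d (j + (n - 1) * k) k)"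
  define \<kappa> where "\<kappa> = d ^ (k * (k - 1))"
  define lam where "lam = 1 / (d ^ k)\<^sup>2"
  define Wg where "Wg = (\<lambda>n. grid e (j + (n - 1) * k) k k)"
  have hM: "M' n = M (j + n * k)" for n unfolding M'_def ..
  have htr: "tr' n = tr (j + n * k)" for n unfolding tr'_def ..
  have hg: "g n = sc \<kappa> (Wg n)" for n unfolding g_def \<kappa>_def Wg_def jw_grid ..
  have ix1: "j + (n - 1) * k + k = j + n * k" if "n \<ge> 1" for n
    using that by (cases n) auto
  have ix2: "j + (n - 1) * k + 2 * k = j + Suc n * k" if "n \<ge> 1" for n
    using that by (cases n) auto
  have ki: "\<kappa> * \<iota>^(k * (k - 1)) = 1" unfolding \<kappa>_def by (rule dinv)
  have lam_i: "\<kappa> * \<iota>^(k * (k + 1)) = lam"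
  proof -
    have "k * (k + 1) = k * (k - 1) + 2 * k" using k by (cases k) auto
    then have "\<iota>^(k * (k + 1)) = \<iota>^(k * (k - 1)) * \<iota>^(2 * k)"
      by (simp only: power_add)
    then have "\<kappa> * \<iota>^(k * (k + 1)) = (\<kappa> * \<iota>^(k * (k - 1))) * \<iota>^(2 * k)"
      by (simp only: mult.assoc)
    also have "\<dots> = \<iota>^(2 * k)" using ki by simp
    also have "\<dots> = lam" unfolding lam_def by (simp add: power_one_over power_mult[symmetric] mult.commute)
    finally show ?thesis .
  qed
  have WgM: "Wg n \<in> M (j + Suc n * k)" if "n \<ge> 1" for n
    unfolding Wg_def by (rule grid_M) (use ix2[OF that] in simp)
  have gM: "g n \<in> M (j + Suc n * k)" if "n \<ge> 1" for n
    unfolding hg using WgM[OF that] sc_M by simp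
  have gidem: "g n * g n = g n" if "n \<ge> 1" for n
  proof -
    have "g n * g n = sc (\<kappa> * \<kappa>) (Wg n * Wg n)" unfolding hg by (simp add: sc_ml sc_mr sc_sc)
    also have "\<dots> = sc (\<kappa> * (\<kappa> * \<iota>^(k * (k - 1)))) (Wg n)"
      unfolding Wg_def W_idem[OF k] by (simp add: sc_sc mult.assoc)
    finally show ?thesis unfolding ki hg by simp
  qed
  have gstar: "star (g n) = g n" for n
    unfolding hg sc_def Wg_def by (simp add: star_real[OF SA] grid_star)
  have gM2: "g n * x * g n = cexp (tr (j + n * k)) (M (j + (n - 1) * k)) x * g n"
    if n: "n \<ge> 1" and x: "x \<in> M (j + n * k)" for n x
  proof -
    define a where "a = j + (n - 1) * k"
    have ak: "a + k = j + n * k" unfolding a_def by (rule ix1[OF n])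
    have xa: "x \<in> M (a + k)" unfolding ak by (rule x)
    have "g n * x * g n = sc (\<kappa> * \<kappa>) (Wg n * x * Wg n)" unfolding hg by (simp add: sc_ml sc_mr sc_sc mult.assoc)
    also have "Wg n * x * Wg n = sc (\<iota>^(k * (k - 1))) (Ec a k x * Wg n)"
      unfolding Wg_def a_def[symmetric] by (rule M2W[OF k xa])
    also have "sc (\<kappa> * \<kappa>) (sc (\<iota>^(k * (k - 1))) (Ec a k x * Wg n)) = Ec a k x * g n"
      unfolding hg using ki by (simp add: sc_sc sc_mr mult.assoc)
    also have "Ec a k x = cexp (tr (j + n * k)) (M (j + (n - 1) * k)) x"
      using Ec_cexp[OF xa] unfolding ak by (simp add: a_def)
    finally show ?thesis .
  qed
  have gMarkov: "tr T (g n * z) = complex_of_real lam * tr T z"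
    if n: "n \<ge> 1" and z: "z \<in> M (j + n * k)" and T: "j + Suc n * k \<le> T" for n z T
  proof -
    define a where "a = j + (n - 1) * k"
    have ak: "a + k = j + n * k" unfolding a_def by (rule ix1[OF n])
    have a2k: "a + 2 * k = j + Suc n * k" unfolding a_def by (rule ix2[OF n])
    have za: "z \<in> M (a + k)" unfolding ak by (rule z)
    have Ta: "a + 2 * k \<le> T" unfolding a2k by (rule T)
    have WzM: "Wg n * z \<in> M T" using WgM[OF n] z Mmono'[of _ _ T] T M_mult by (meson Mmono' le_trans mult_le_mono1 nat_add_left_cancel_le le_SucI order_refl)
    have "tr T (g n * z) = complex_of_real \<kappa> * tr T (Wg n * z)"
      unfolding hg sc_ml by (rule tr_sc[OF WzM])
    also have "tr T (Wg n * z) = complex_of_real (\<iota>^(k * (k + 1))) * tr T z"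
      unfolding Wg_def a_def[symmetric] by (rule Markov_W[OF k za Ta])
    finally show ?thesis using lam_i by (metis mult.assoc of_real_mult)
  qed
  have gM3: "cexp (tr (j + Suc n * k)) (M (j + n * k)) (g n) = sm (complex_of_real lam) 1"
    if n: "n \<ge> 1" for n
  proof (rule cexp_genI)
    show "j + n * k \<le> j + Suc n * k" by simp
    show "sm (complex_of_real lam) 1 \<in> M (j + n * k)" using M_sm M_one by blast
    show "\<forall>z\<in>M (j + n * k). tr (j + Suc n * k) (sm (complex_of_real lam) 1 * z) = tr (j + Suc n * k) (g n * z)"
    proof
      fix z assume z: "z \<in> M (j + n * k)"
      have zT: "z \<in> M (j + Suc n * k)" using z Mmono' by force
      have "tr (j + Suc n * k) (sm (complex_of_real lam) 1 * z) = complex_of_real lam * tr (j + Suc n * k) z"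
        using tr_sm'[OF zT] sm_one_l[OF SA] by simp
      also have "\<dots> = tr (j + Suc n * k) (g n * z)" using gMarkov[OF n z] by simp
      finally show "tr (j + Suc n * k) (sm (complex_of_real lam) 1 * z) = tr (j + Suc n * k) (g n * z)" .
    qed
  qed
  have gM4: "(\<lambda>x. x * g n) ` M (j + Suc n * k) = (\<lambda>x. x * g n) ` M (j + n * k)" if n: "n \<ge> 1" for n
  proof
    show "(\<lambda>x. x * g n) ` M (j + n * k) \<subseteq> (\<lambda>x. x * g n) ` M (j + Suc n * k)"
      using Mmono[of "j + n * k" "j + Suc n * k"] by auto
  next
    show "(\<lambda>x. x * g n) ` M (j + Suc n * k) \<subseteq> (\<lambda>x. x * g n) ` M (j + n * k)"
    proof
      fix w assume "w \<in> (\<lambda>x. x * g n) ` M (j + Suc n * k)"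
      then obtain x where x: "x \<in> M (j + Suc n * k)" "w = x * g n" by blast
      define a where "a = j + (n - 1) * k"
      have ak: "a + k = j + n * k" unfolding a_def by (rule ix1[OF n])
      have a2k: "a + 2 * k = j + Suc n * k" unfolding a_def by (rule ix2[OF n])
      have xa: "x \<in> M (a + 2 * k)" unfolding a2k by (rule x(1))
      obtain y where y: "y \<in> M (a + k)" "x * grid e a k k = y * grid e a k k"
        using M4W[OF k xa] by blast
      have "w = y * g n" unfolding x(2) hg Wg_def a_def[symmetric] sc_mr using y(2) by simp
      moreover have "y \<in> M (j + n * k)" using y(1) unfolding ak .
      ultimately show "w \<in> (\<lambda>x. x * g n) ` M (j + n * k)" by blast
    qed
  qed
  have gcomm: "g i * g i' = g i' * g i" if i: "i \<ge> 1" "i + 1 < i'" for i i'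
  proof -
    have p: "j + Suc i * k \<le> j + (i' - 1) * k" using i by (intro add_left_mono mult_le_mono1) simp
    have c: "Wg i' * g i = g i * Wg i'" unfolding Wg_def by (rule grid_commM[OF gM[OF i(1)] p])
    show ?thesis unfolding hg[of i'] by (simp add: sc_ml sc_mr c)
  qed
  have gTL2: "g (Suc i) * g i * g (Suc i) = sm (complex_of_real lam) (g (Suc i))" if i: "i \<ge> 1" for i
  proof -
    have "g (Suc i) * g i * g (Suc i) = cexp (tr (j + Suc i * k)) (M (j + (Suc i - 1) * k)) (g i) * g (Suc i)"
      by (rule gM2) (use gM[OF i] in auto)
    also have "\<dots> = sm (complex_of_real lam) 1 * g (Suc i)" using gM3[OF i] by simp
    finally show ?thesis using sm_one_l[OF SA] by simp
  qed
  have gTL1: "g i * g (Suc i) * g i = sm (complex_of_real lam) (g i)" if i: "i \<ge> 1" for i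
  proof -
    have "g i * g (Suc i) * g i = sc lam (g i)"
    proof (rule tl_from)
      show "g i \<in> M (j + Suc (Suc i) * k)" using gM[OF i] Mmono' by force
      show "g (Suc i) \<in> M (j + Suc (Suc i) * k)" using gM[of "Suc i"] by simp
      show "g i * g i = g i" using gidem[OF i] .
      show "star (g i) = g i" by (rule gstar)
      show "star (g (Suc i)) = g (Suc i)" by (rule gstar)
      show "g (Suc i) * g i * g (Suc i) = sc lam (g (Suc i))" using gTL2[OF i] unfolding sc_def .
      show "tr (j + Suc (Suc i) * k) (g (Suc i) * g i) = complex_of_real lam * tr (j + Suc (Suc i) * k) (g i)"
        by (rule gMarkov) (use gM[OF i] in auto)
    qed
    then show ?thesis unfolding sc_def .
  qed
  have "markov_tower sm star M' tr' g (d ^ k)"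
    unfolding markov_tower_def
  proof (intro conjI)
    show "star_alg sm star" by (rule SA)
    show "d ^ k > 0" using dpos by simp
    show "\<forall>n. fd_star_subalg sm star (M' n)" unfolding hM using FDn by blast
    show "\<forall>n. M' n \<subseteq> M' (Suc n)" unfolding hM using Mmono by simp
    show "\<forall>n. faithful_tracial_state sm star (M' n) (tr' n)" unfolding hM htr using FTn by blast
    show "\<forall>n. \<forall>x\<in>M' n. tr' (Suc n) x = tr' n x" unfolding hM htr using tr_lift by simp
    show "\<forall>n\<ge>1. g n \<in> M' (Suc n)" unfolding hM using gM by blast
    show "\<forall>n\<ge>1. g n * g n = g n \<and> star (g n) = g n" using gidem gstar by blast
    show "\<forall>i\<ge>1. \<forall>j\<ge>1. i + 1 < j \<or> j + 1 < i \<longrightarrow> g i * g j = g j * g i"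
      using gcomm by metis
    show "\<forall>i\<ge>1. g i * g (Suc i) * g i = sm (complex_of_real (1 / (d ^ k)\<^sup>2)) (g i)"
      using gTL1 unfolding lam_def by blast
    show "\<forall>i\<ge>1. g (Suc i) * g i * g (Suc i) = sm (complex_of_real (1 / (d ^ k)\<^sup>2)) (g (Suc i))"
      using gTL2 unfolding lam_def by blast
    show "\<forall>n\<ge>1. \<forall>x\<in>M' n. g n * x * g n = cexp (tr' n) (M' (n - 1)) x * g n"
      unfolding hM htr using gM2 by blast
    show "\<forall>n\<ge>1. cexp (tr' (Suc n)) (M' n) (g n) = sm (complex_of_real (1 / (d ^ k)\<^sup>2)) 1"
      unfolding hM htr using gM3 unfolding lam_def by blast
    show "\<forall>n\<ge>1. (\<lambda>x. x * g n) ` M' (Suc n) = (\<lambda>x. x * g n) ` M' n"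
      unfolding hM using gM4 by blast
  qed
  then show ?thesis unfolding M'_def tr'_def g_def .
qed
end



theorem mainTheorem8:
  fixes sm :: "complex \<Rightarrow> 'a::ring_1 \<Rightarrow> 'a" and star :: "'a \<Rightarrow> 'a"
    and M :: "nat \<Rightarrow> 'a set" and tr :: "nat \<Rightarrow> 'a \<Rightarrow> complex" and e :: "nat \<Rightarrow> 'a"
    and d :: real and j k :: nat
  assumes "markov_tower sm star M tr e d"
    and "k \<ge> 1"
  shows "markov_tower sm star (\<lambda>n. M (j + n * k)) (\<lambda>n. tr (j + n * k))
           (\<lambda>n. jw_f sm e d (j + (n - 1) * k) k) (d ^ k)"
proof -
  interpret mt sm star M tr e d by (rule mt.intro) (rule assms(1))
  show ?thesis by (rule new_tower[OF assms(2)])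
qed

end
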